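(* Let $f,a_1,p,d_1\in\mathbb{C}$ with $\mathrm{Re}(f-2a_1-2d_1-1)>0$, such that the series below is well defined (no lower parameter is a nonpositive integer), $a_1\ne0$, and the quantities below are defined and $k$ is not a nonpositive integer. Put $$h=\frac{p(f-p-1)}{a_1},\qquad k=\frac{h(1+d_1+a_1-f)(\frac12+a_1-\frac12 f)}{d_1(\frac12 f-\frac12)-h(\frac12+d_1+a_1-\frac12 f)}.$$ Then $$ {}_{5}F_{4}\left[\begin{matrix} f-1,\ a_1,\ f-p,\ p+1,\ d_1\\ f-a_1,\ p,\ f-p-1,\ f-d_1\end{matrix};1\right]=\frac{\Gamma(f-d_1)\Gamma(\frac12 f+\frac12)\Gamma(f-a_1)\Gamma(\frac12 f-a_1-d_1-\frac12)}{\Gamma(f)\Gamma(\frac12 f-d_1+\frac12)\Gamma(f-a_1-d_1-1)\Gamma(\frac12 f-a_1-\frac12)}\cdot\frac{\Gamma(k)}{\Gamma(k+1)}.$$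
   Context: $(x)_n$ denotes the Pochhammer symbol: $(x)_0=1$, $(x)_n=x(x+1)\cdots(x+n-1)$ for $n\ge1$. The generalized hypergeometric function is $${}_{r+1}F_{r}\left[\begin{matrix} a_1,\dots,a_{r+1}\\ b_1,\dots,b_r\end{matrix};z\right]=\sum_{n=0}^{\infty}\frac{(a_1)_n\cdots(a_{r+1})_n}{(b_1)_n\cdots(b_r)_n\,n!}z^n ,$$ where no $b_i$ is a nonpositive integer. $\Gamma$ is Euler's gamma function. *)

theory Defs
  imports "HOL-Analysis.Analysis"
begin

definition hypergeom :: "complex list \<Rightarrow> complex list \<Rightarrow> complex \<Rightarrow> complex" where
  "hypergeom as bs z =
     (\<Sum>n. (\<Prod>a\<leftarrow>as. pochhammer a n) / ((\<Prod>b\<leftarrow>bs. pochhammer b n) * fact n) * z ^ n)"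

end

theory Submission
  imports Defs "HOL-Real_Asymp.Real_Asymp"
begin

lemma n_over_zn: "(\<lambda>n. of_nat n / (z + of_nat n) :: complex) \<longlonglongrightarrow> 1"
proof -
  have "(\<lambda>n. 1 / (z * (1 / of_nat n) + 1) :: complex) \<longlonglongrightarrow> 1 / (z * 0 + 1)"
    by (intro tendsto_intros lim_1_over_n) simp
  moreover have "eventually (\<lambda>n. 1 / (z * (1 / of_nat n) + 1) = of_nat n / (z + of_nat n)) sequentially"
    using eventually_gt_at_top[of 0]
    by eventually_elim (simp add: field_simps)
  ultimately show ?thesis by (simp add: tendsto_cong)
qed

lemma ps_lim:
  fixes z :: complex
  shows "(\<lambda>n. pochhammer z n / (fact n * exp ((z - 1) * of_real (ln (of_nat n))))) \<longlonglongrightarrow> rGamma z"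
proof -
  have "(\<lambda>n. rGamma_series z n * (of_nat n / (z + of_nat n))) \<longlonglongrightarrow> rGamma z * 1"
    by (intro tendsto_intros n_over_zn)
  moreover have "eventually (\<lambda>n. rGamma_series z n * (of_nat n / (z + of_nat n)) =
      pochhammer z n / (fact n * exp ((z - 1) * of_real (ln (of_nat n))))) sequentially"
    using eventually_gt_at_top[of "nat (ceiling (norm z)) + 1"]
  proof eventually_elim
    case (elim n)
    have n0: "n > 0" using elim by simp
    have "z + of_nat n \<noteq> 0"
    proof
      assume "z + of_nat n = 0"
      hence "z = - of_nat n" by (simp add: add_eq_0_iff)
      hence "norm z = real n" by simp
      with elim show False by linarith
    qed
    define E where "E = exp (z * of_real (ln (of_nat n)))"
    have E0: "E \<noteq> 0" unfolding E_def by simp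
    have e: "exp ((z - 1) * of_real (ln (of_nat n))) = E / of_nat n"
      using n0 unfolding E_def by (simp add: algebra_simps exp_diff exp_of_real)
    have r: "rGamma_series z n = pochhammer z n * (z + of_nat n) / (fact n * E)"
      unfolding E_def rGamma_series_def by (simp add: pochhammer_Suc)
    have aux: "X * w / (F * E) * (m / w) = X / (F * (E / m))"
      if "w \<noteq> 0" "E \<noteq> 0" "F \<noteq> 0" "m \<noteq> 0" for X w F E m :: complex
      using that by (simp add: field_simps)
    show ?case unfolding r e using n0 E0 \<open>z + of_nat n \<noteq> 0\<close>
      by (intro aux) auto
  qed
  ultimately show ?thesis by (simp add: tendsto_cong)
qed

definition gt :: "complex \<Rightarrow> complex \<Rightarrow> complex \<Rightarrow> complex \<Rightarrow> complex \<Rightarrow> nat \<Rightarrow> complex" where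
  "gt u1 u2 u3 l1 l2 n = pochhammer u1 n * pochhammer u2 n * pochhammer u3 n /
       (pochhammer l1 n * pochhammer l2 n * fact n)"

definition ex :: "complex \<Rightarrow> nat \<Rightarrow> complex" where
  "ex w n = exp (w * of_real (ln (of_nat n)))"

definition ps :: "complex \<Rightarrow> nat \<Rightarrow> complex" where
  "ps z n = pochhammer z n / (fact n * ex (z - 1) n)"

lemma ps_lim': "ps z \<longlonglongrightarrow> rGamma z"
  using ps_lim[of z] unfolding ps_def ex_def .

lemma ex_add: "ex (a + b) n = ex a n * ex b n"
  unfolding ex_def by (simp add: distrib_right exp_add)

lemma ex_nz: "ex a n \<noteq> 0" unfolding ex_def by simp

lemma norm_ex: "n > 0 \<Longrightarrow> norm (ex w n) = real n powr Re w"
  unfolding ex_def norm_exp_eq_Re by (simp add: powr_def)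

lemma poch_nz: "l \<notin> \<int>\<^sub>\<le>\<^sub>0 \<Longrightarrow> pochhammer l n \<noteq> (0::complex)"
  by (auto dest: pochhammer_eq_0_imp_nonpos_Int)

lemma gt_eq:
  assumes "l1 \<notin> \<int>\<^sub>\<le>\<^sub>0" "l2 \<notin> \<int>\<^sub>\<le>\<^sub>0"
  shows "gt u1 u2 u3 l1 l2 n * ex (l1 + l2 - u1 - u2 - u3 + 1) n =
     ps u1 n * ps u2 n * ps u3 n / (ps l1 n * ps l2 n)"
proof -
  have e: "ex (l1 + l2 - u1 - u2 - u3 + 1) n * (ex (u1 - 1) n * ex (u2 - 1) n * ex (u3 - 1) n)
      = ex (l1 - 1) n * ex (l2 - 1) n"
    unfolding ex_add[symmetric] by (simp add: algebra_simps)
  have p1: "pochhammer l1 n \<noteq> 0" "pochhammer l2 n \<noteq> 0" using poch_nz[OF assms(1)] poch_nz[OF assms(2)] by auto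
  have aux: "X1 * X2 * X3 / (L1 * L2 * F) * E = X1 / (F * D1) * (X2 / (F * D2)) * (X3 / (F * D3)) / (L1 / (F * M1) * (L2 / (F * M2)))"
    if "E * (D1 * D2 * D3) = M1 * M2" "L1 \<noteq> 0" "L2 \<noteq> 0" "F \<noteq> 0" "D1 \<noteq> 0" "D2 \<noteq> 0" "D3 \<noteq> 0"
       "M1 \<noteq> 0" "M2 \<noteq> 0"
    for X1 X2 X3 L1 L2 F E D1 D2 D3 M1 M2 :: complex
  proof -
    have "X1 * X2 * X3 / (L1 * L2 * F) * E = X1 * X2 * X3 * (E * (D1 * D2 * D3)) / (L1 * L2 * F * (D1 * D2 * D3))"
      using that by (simp add: field_simps)
    also have "\<dots> = X1 * X2 * X3 * (M1 * M2) / (L1 * L2 * F * (D1 * D2 * D3))" using that(1) by simp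
    also have "\<dots> = X1 / (F * D1) * (X2 / (F * D2)) * (X3 / (F * D3)) / (L1 / (F * M1) * (L2 / (F * M2)))"
      using that by (simp add: field_simps)
    finally show ?thesis .
  qed
  show ?thesis unfolding gt_def ps_def
    by (rule aux[OF e p1]) (auto simp: ex_nz)
qed

lemma gt_bound:
  assumes "l1 \<notin> \<int>\<^sub>\<le>\<^sub>0" "l2 \<notin> \<int>\<^sub>\<le>\<^sub>0"
  obtains K where "K > 0" "\<And>n. n > 0 \<Longrightarrow>
     norm (gt u1 u2 u3 l1 l2 n) \<le> K * real n powr (-(Re (l1 + l2 - u1 - u2 - u3) + 1))"
proof -
  define \<sigma> where "\<sigma> = l1 + l2 - u1 - u2 - u3"
  have "(\<lambda>n. ps u1 n * ps u2 n * ps u3 n / (ps l1 n * ps l2 n)) \<longlonglongrightarrow>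
      rGamma u1 * rGamma u2 * rGamma u3 / (rGamma l1 * rGamma l2)"
    using assms by (intro tendsto_intros ps_lim') (auto simp: rGamma_eq_zero_iff)
  hence "convergent (\<lambda>n. gt u1 u2 u3 l1 l2 n * ex (\<sigma> + 1) n)"
    unfolding \<sigma>_def gt_eq[OF assms] by (auto simp: convergent_def)
  then obtain K where K: "K > 0" "\<And>n. norm (gt u1 u2 u3 l1 l2 n * ex (\<sigma> + 1) n) \<le> K"
    using convergent_imp_Bseq BseqE by blast
  show ?thesis
  proof (rule that[OF K(1)])
    fix n :: nat assume n: "n > 0"
    have "norm (gt u1 u2 u3 l1 l2 n) * real n powr (Re \<sigma> + 1) \<le> K"
      using K(2)[of n] n by (simp add: norm_mult norm_ex)
    moreover have "real n powr (Re \<sigma> + 1) > 0" using n by simp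
    ultimately have "norm (gt u1 u2 u3 l1 l2 n) \<le> K / real n powr (Re \<sigma> + 1)"
      by (simp add: field_simps)
    also have "\<dots> = K * real n powr (-(Re \<sigma> + 1))"
      by (simp only: powr_minus divide_inverse)
    finally show "norm (gt u1 u2 u3 l1 l2 n) \<le> K * real n powr (-(Re (l1 + l2 - u1 - u2 - u3) + 1))"
      unfolding \<sigma>_def .
  qed
qed

lemma gt_summable:
  assumes "l1 \<notin> \<int>\<^sub>\<le>\<^sub>0" "l2 \<notin> \<int>\<^sub>\<le>\<^sub>0" "Re (l1 + l2 - u1 - u2 - u3) > 0"
  shows "summable (\<lambda>n. norm (gt u1 u2 u3 l1 l2 n))"
proof -
  obtain K where K: "K > 0" "\<And>n. n > 0 \<Longrightarrow>
     norm (gt u1 u2 u3 l1 l2 n) \<le> K * real n powr (-(Re (l1 + l2 - u1 - u2 - u3) + 1))"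
    using gt_bound[OF assms(1,2)] by blast
  have "summable (\<lambda>n. K * real n powr (-(Re (l1 + l2 - u1 - u2 - u3) + 1)))"
    using assms(3) by (intro summable_mult) (simp add: summable_real_powr_iff)
  moreover have "eventually (\<lambda>n. norm (norm (gt u1 u2 u3 l1 l2 n)) \<le>
       K * real n powr (-(Re (l1 + l2 - u1 - u2 - u3) + 1))) sequentially"
    using eventually_gt_at_top[of 0] by eventually_elim (use K in auto)
  ultimately show ?thesis by (rule summable_comparison_test_ev[rotated])
qed

lemma gt_lim_n:
  assumes "l1 \<notin> \<int>\<^sub>\<le>\<^sub>0" "l2 \<notin> \<int>\<^sub>\<le>\<^sub>0" "Re (l1 + l2 - u1 - u2 - u3) > 0"
  shows "(\<lambda>n. of_nat n * gt u1 u2 u3 l1 l2 n) \<longlonglongrightarrow> 0"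
proof -
  define \<sigma> where "\<sigma> = Re (l1 + l2 - u1 - u2 - u3)"
  obtain K where K: "K > 0" "\<And>n. n > 0 \<Longrightarrow>
     norm (gt u1 u2 u3 l1 l2 n) \<le> K * real n powr (-(\<sigma> + 1))"
    using gt_bound[OF assms(1,2)] unfolding \<sigma>_def by blast
  have \<sigma>0: "\<sigma> > 0" using assms(3) unfolding \<sigma>_def .
  have L: "(\<lambda>n. K * real n powr (-\<sigma>)) \<longlonglongrightarrow> 0"
    using \<sigma>0
    using tendsto_mult_right_zero[OF tendsto_neg_powr[OF _ filterlim_real_sequentially], of "-\<sigma>" K]
    by simp
  have E: "eventually (\<lambda>n. norm (of_nat n * gt u1 u2 u3 l1 l2 n) \<le> K * real n powr (-\<sigma>)) sequentially"
    using eventually_gt_at_top[of 0]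
  proof eventually_elim
    case (elim n)
    have "norm (of_nat n * gt u1 u2 u3 l1 l2 n) \<le> real n * (K * real n powr (-(\<sigma> + 1)))"
      using K(2)[OF elim] unfolding norm_mult norm_of_nat by (rule mult_left_mono) auto
    also have "real n * (K * real n powr (-(\<sigma> + 1))) = K * real n powr (-\<sigma>)"
    proof -
      have "real n * real n powr (-(\<sigma> + 1)) = real n powr 1 * real n powr (-(\<sigma> + 1))"
        using elim by simp
      also have "\<dots> = real n powr (1 + -(\<sigma> + 1))" by (rule powr_add[symmetric])
      also have "1 + -(\<sigma> + 1) = -\<sigma>" by simp
      finally have A: "real n * real n powr (-(\<sigma> + 1)) = real n powr (-\<sigma>)" .
      show ?thesis using A by (metis mult.left_commute)
    qed
    finally show ?case .
  qed
  show ?thesis by (rule Lim_null_comparison[OF E L])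
qed

definition dt :: "complex \<Rightarrow> complex \<Rightarrow> complex \<Rightarrow> nat \<Rightarrow> complex" where
  "dt a b c n = gt a b c (1 + a - b) (1 + a - c) n"

lemma npi_add_nat:
  assumes "x \<notin> \<int>\<^sub>\<le>\<^sub>0" shows "x + of_nat k \<notin> (\<int>\<^sub>\<le>\<^sub>0 :: complex set)"
proof
  assume "x + of_nat k \<in> \<int>\<^sub>\<le>\<^sub>0"
  then obtain m where "x + of_nat k = - of_nat m" by (elim nonpos_Ints_cases')
  hence "x = - of_nat m - of_nat k" by (metis add_diff_cancel_right')
  hence "x = - of_nat (m + k)" by simp
  moreover have "- of_nat (m + k) \<in> (\<int>\<^sub>\<le>\<^sub>0 :: complex set)" by (rule minus_of_nat_in_nonpos_Ints)
  ultimately show False using assms by simp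
qed

lemma npi_nz: "x \<notin> \<int>\<^sub>\<le>\<^sub>0 \<Longrightarrow> x + of_nat k \<noteq> (0::complex)"
  using npi_add_nat[of x k] by auto

lemma div_aux3: "(x1*x2)*(x3*x4)*(x5*x6)/((y1*y2)*(y3*y4)*(y5*y6)) = (x1*x3*x5/(y1*y3*y6)) * (x2*x4*x6/(y2*y4*y5))"
  for x1 x2 x3 x4 x5 x6 y1 y2 y3 y4 y5 y6 :: complex
  by (subst times_divide_times_eq, simp add: ac_simps)

lemma solve_mul: "k \<noteq> 0 \<Longrightarrow> k * X = Y \<Longrightarrow> X = Y / (k::complex)"
  by (simp add: field_simps)

lemma dt_Suc: "dt a b c (Suc n) = dt a b c n *
   ((a + of_nat n) * (b + of_nat n) * (c + of_nat n) /
    ((1 + a - b + of_nat n) * (1 + a - c + of_nat n) * of_nat (Suc n)))"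
  unfolding dt_def gt_def pochhammer_Suc fact_Suc of_nat_mult
  by (rule div_aux3)

lemma poch2: "pochhammer z (Suc (Suc n)) = z * (z + 1) * pochhammer (z + 2) n"
  "pochhammer z (Suc (Suc n)) = pochhammer z n * (z + of_nat n) * (z + of_nat n + 1)"
  for z :: complex
  by (simp only: pochhammer_rec, simp add: algebra_simps) (simp only: pochhammer_Suc, simp add: algebra_simps)

lemma dt_shift2:
  assumes a0: "a \<noteq> 0" and l: "1 + a - b \<notin> \<int>\<^sub>\<le>\<^sub>0" "1 + a - c \<notin> \<int>\<^sub>\<le>\<^sub>0"
  shows "(1 + a) * dt (a + 2) b c n = dt a b c n *
    ((a + of_nat n) * (a + of_nat n + 1) * ((1 + a - b) * (2 + a - b) * (1 + a - c) * (2 + a - c)) /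
     (a * ((1 + a - b + of_nat n) * (2 + a - b + of_nat n) * (1 + a - c + of_nat n) * (2 + a - c + of_nat n))))" (is "_ = ?rhs")
proof -
  define lb where "lb = 1 + a - b"
  define lc where "lc = 1 + a - c"
  have e1: "1 + (a + 2) - b = lb + 2" "1 + (a + 2) - c = lc + 2" "2 + a - b = lb + 1" "2 + a - c = lc + 1"
    unfolding lb_def lc_def by simp_all
  have A: "a * (a + 1) * pochhammer (a + 2) n = pochhammer a n * (a + of_nat n) * (a + of_nat n + 1)"
    using poch2[of a n] by simp
  have B: "lb * (lb + 1) * pochhammer (lb + 2) n = pochhammer lb n * (lb + of_nat n) * (lb + of_nat n + 1)"
    using poch2[of lb n] by simp
  have C: "lc * (lc + 1) * pochhammer (lc + 2) n = pochhammer lc n * (lc + of_nat n) * (lc + of_nat n + 1)"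
    using poch2[of lc n] by simp
  have nz: "lb \<noteq> 0" "lb + 1 \<noteq> 0" "lc \<noteq> 0" "lc + 1 \<noteq> 0" "pochhammer lb n \<noteq> 0" "pochhammer lc n \<noteq> 0"
    "lb + of_nat n \<noteq> 0" "lb + of_nat n + 1 \<noteq> 0" "lc + of_nat n \<noteq> 0" "lc + of_nat n + 1 \<noteq> 0"
    using npi_nz[OF l(1), of 0] npi_nz[OF l(1), of 1] npi_nz[OF l(2), of 0] npi_nz[OF l(2), of 1]
      poch_nz[OF l(1)] poch_nz[OF l(2)] npi_nz[OF l(1), of n] npi_nz[OF l(1), of "n+1"]
      npi_nz[OF l(2), of n] npi_nz[OF l(2), of "n+1"]
    unfolding lb_def lc_def by (simp_all add: algebra_simps)
  have pb: "pochhammer (lb + 2) n = pochhammer lb n * (lb + of_nat n) * (lb + of_nat n + 1) / (lb * (lb + 1))"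
    by (rule solve_mul) (use B nz in auto)
  have pc: "pochhammer (lc + 2) n = pochhammer lc n * (lc + of_nat n) * (lc + of_nat n + 1) / (lc * (lc + 1))"
    by (rule solve_mul) (use C nz in auto)
  have pa: "(1 + a) * pochhammer (a + 2) n = pochhammer a n * (a + of_nat n) * (a + of_nat n + 1) / a"
    by (rule solve_mul) (use A a0 in \<open>auto simp: ac_simps\<close>)
  have shift_alg: "(PA*A1*A2/a) * PB * PC / ((PL*X1*X2/(L1*L2)) * (PM*Y1*Y2/(M1*M2)) * F)
       = PA*PB*PC/(PL*PM*F) * (A1*A2*(L1*L2*(M1*M2))/(a*(X1*X2*(Y1*Y2))))"
    if "a\<noteq>0" "L1\<noteq>0" "L2\<noteq>0" "M1\<noteq>0" "M2\<noteq>0" "PL\<noteq>0" "PM\<noteq>0" "F\<noteq>0"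
       "X1\<noteq>0" "X2\<noteq>0" "Y1\<noteq>0" "Y2\<noteq>0"
    for PA A1 A2 a PB PC PL X1 X2 L1 L2 PM Y1 Y2 M1 M2 F :: complex
    using that by (simp add: field_simps)
  have "(1 + a) * dt (a + 2) b c n = ((1 + a) * pochhammer (a + 2) n) * pochhammer b n * pochhammer c n /
      (pochhammer (lb + 2) n * pochhammer (lc + 2) n * fact n)"
    unfolding dt_def gt_def e1 by (simp add: mult.assoc)
  also have "\<dots> = (pochhammer a n * (a + of_nat n) * (a + of_nat n + 1) / a) * pochhammer b n * pochhammer c n /
      ((pochhammer lb n * (lb + of_nat n) * (lb + of_nat n + 1) / (lb * (lb + 1))) *
       (pochhammer lc n * (lc + of_nat n) * (lc + of_nat n + 1) / (lc * (lc + 1))) * fact n)"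
    by (simp only: pa pb pc)
  also have "\<dots> = pochhammer a n * pochhammer b n * pochhammer c n / (pochhammer lb n * pochhammer lc n * fact n) *
      ((a + of_nat n) * (a + of_nat n + 1) * (lb * (lb + 1) * (lc * (lc + 1))) /
       (a * ((lb + of_nat n) * (lb + of_nat n + 1) * ((lc + of_nat n) * (lc + of_nat n + 1)))))"
    by (rule shift_alg) (use nz a0 in auto)
  also have "\<dots> = ?rhs"
    unfolding dt_def gt_def lb_def lc_def by (simp add: algebra_simps)
  finally show ?thesis .
qed

definition NumF :: "complex \<Rightarrow> complex \<Rightarrow> complex \<Rightarrow> complex \<Rightarrow> complex" where
  "NumF a b c x = a*x^2 + a*(3+3*a-2*b-2*c)*x + (2*a^3+3*a^2-2*a^2*b-2*a^2*c-a+a*c+a*b-a*b*c-2+4*c-2*c^2+4*b-6*b*c+2*b*c^2-2*b^2+2*b^2*c)"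

definition Rr :: "complex \<Rightarrow> complex \<Rightarrow> complex \<Rightarrow> complex" where
  "Rr a b c = (1+a)*((2+a-2*b)*(2+a-2*c)*(1+a-b-c)*(2+a-b-c)) /
      ((1+a-b)*(2+a-b)*(1+a-c)*(2+a-c)*(a+2-2*b-2*c))"

definition Gc :: "complex \<Rightarrow> complex \<Rightarrow> complex \<Rightarrow> nat \<Rightarrow> complex" where
  "Gc a b c n = dt a b c n * (of_nat n * (NumF a b c (of_nat n) / (a*(a+2-2*b-2*c))) /
      ((1+a-b + of_nat n)*(1+a-c + of_nat n)))"

lemma cert_poly:
  fixes a b c x :: complex
  shows "NumF a b c (x+1) * ((a+x)*(b+x)*(c+x))
     - NumF a b c x * (x*(2+a-b+x)*(2+a-c+x))
     - (2+a-2*b)*(2+a-2*c)*(1+a-b-c)*(2+a-b-c)*((a+x)*(a+x+1))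
     + a*(a+2-2*b-2*c)*((1+a-b+x)*(2+a-b+x)*(1+a-c+x)*(2+a-c+x)) = 0"
  unfolding NumF_def by algebra

lemma lin_aux: "A*B - C = E*F - (1::complex) \<Longrightarrow> D*A*B - D*C = D*E*F - D"
proof -
  assume h: "A*B - C = E*F - (1::complex)"
  have "D*A*B - D*C = D*(A*B - C)" by (simp add: algebra_simps)
  also have "\<dots> = D*(E*F - 1)" using h by simp
  also have "\<dots> = D*E*F - D" by (simp add: algebra_simps)
  finally show ?thesis .
qed

lemma tele:
  assumes a0: "a \<noteq> 0" and l: "1 + a - b \<notin> \<int>\<^sub>\<le>\<^sub>0" "1 + a - c \<notin> \<int>\<^sub>\<le>\<^sub>0"
    and s0: "a + 2 - 2*b - 2*c \<noteq> 0"
  shows "Gc a b c (Suc n) - Gc a b c n = Rr a b c * dt (a + 2) b c n - dt a b c n"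
proof -
  define x where "x = (of_nat n :: complex)"
  define P1 where "P1 = 1 + a - b + x"
  define P2 where "P2 = 1 + a - c + x"
  define P4 where "P4 = 2 + a - b + x"
  define P5 where "P5 = 2 + a - c + x"
  define L where "L = (1+a-b)*(2+a-b)*(1+a-c)*(2+a-c)"
  define S where "S = a + 2 - 2*b - 2*c"
  define U where "U = (a+x)*(b+x)*(c+x)"
  define XX where "XX = (a+x)*(a+x+1)"
  define C1 where "C1 = (2+a-2*b)*(2+a-2*c)*(1+a-b-c)*(2+a-b-c)"
  define N0 where "N0 = NumF a b c x"
  define X1 where "X1 = x + 1"
  define N1 where "N1 = NumF a b c X1"
  have key: "N1 * U - N0 * (x * P4 * P5) - C1 * XX + a * S * (P1 * P4 * P2 * P5) = 0"
    using cert_poly[of a b c x] unfolding N1_def X1_def U_def N0_def P4_def P5_def C1_def XX_def S_def P1_def P2_def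
    by (simp add: algebra_simps)
  have nzl: "1 + a - b + of_nat k \<noteq> 0" "1 + a - c + of_nat k \<noteq> 0" for k
    using npi_nz[OF l(1)] npi_nz[OF l(2)] by auto
  have f: "1+a-b \<noteq> 0" "2+a-b \<noteq> 0" "1+a-c \<noteq> 0" "2+a-c \<noteq> 0"
  proof -
    have e1: "2+a-b = 1+a-b + of_nat 1" and e2: "2+a-c = 1+a-c + of_nat 1" by simp_all
    show "1+a-b \<noteq> 0" "1+a-c \<noteq> 0" using nzl[of 0] by simp_all
    show "2+a-b \<noteq> 0" by (subst e1) (rule nzl)
    show "2+a-c \<noteq> 0" by (subst e2) (rule nzl)
  qed
  have nz: "P1 \<noteq> 0" "P2 \<noteq> 0" "P4 \<noteq> 0" "P5 \<noteq> 0" "S \<noteq> 0"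
    unfolding P1_def P2_def P4_def P5_def S_def x_def
    using nzl[of n] nzl[of "Suc n"] s0
    by (simp_all add: algebra_simps)
  have X1nz: "X1 \<noteq> 0"
  proof -
    have "X1 = of_nat (Suc n)" unfolding X1_def x_def by simp
    thus ?thesis by (simp only: of_nat_eq_0_iff)
  qed
  have Lnz: "L \<noteq> 0" unfolding L_def using f by (simp only: mult_eq_0_iff de_Morgan_disj) simp
  have dS: "dt a b c (Suc n) = dt a b c n * (U / (P1 * P2 * X1))"
    unfolding dt_Suc U_def P1_def P2_def X1_def x_def by (simp add: add_ac)
  have d2: "(1 + a) * dt (a + 2) b c n = dt a b c n * (XX * L / (a * (P1 * P4 * P2 * P5)))"
    unfolding dt_shift2[OF a0 l] XX_def L_def P1_def P2_def P4_def P5_def x_def by (simp add: ac_simps)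
  have R: "Rr a b c = (1 + a) * (C1 / (L * S))"
    unfolding Rr_def C1_def L_def S_def by simp
  have G1: "Gc a b c (Suc n) = dt a b c n * (U / (P1 * P2 * X1)) * (X1 * (N1 / (a * S)) / (P4 * P5))"
  proof -
    have e: "1 + a - b + X1 = P4" "1 + a - c + X1 = P5" "of_nat (Suc n) = X1"
      unfolding P4_def P5_def X1_def x_def by simp_all
    show ?thesis unfolding Gc_def e dS N1_def[symmetric] S_def[symmetric] by (simp only: mult.assoc)
  qed
  have G0: "Gc a b c n = dt a b c n * (x * (N0 / (a * S)) / (P1 * P2))"
    unfolding Gc_def N0_def S_def P1_def P2_def x_def by simp
  have RD: "Rr a b c * dt (a + 2) b c n = dt a b c n * (XX * L / (a * (P1 * P4 * P2 * P5))) * (C1 / (L * S))"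
    unfolding R d2[symmetric] by (simp add: ac_simps)
  have Q: "(U / (P1 * P2 * X1)) * (X1 * (N1 / (a * S)) / (P4 * P5)) - (x * (N0 / (a * S)) / (P1 * P2))
     = (XX * L / (a * (P1 * P4 * P2 * P5))) * (C1 / (L * S)) - 1"
  proof -
    have "(U / (P1 * P2 * X1)) * (X1 * (N1 / (a * S)) / (P4 * P5)) - (x * (N0 / (a * S)) / (P1 * P2))
        - ((XX * L / (a * (P1 * P4 * P2 * P5))) * (C1 / (L * S)) - 1)
        = (N1 * U - N0 * (x * P4 * P5) - C1 * XX + a * S * (P1 * P4 * P2 * P5)) / (a * S * (P1 * P4 * P2 * P5))"
      using nz Lnz X1nz a0 by (simp add: field_simps)
    also have "\<dots> = 0" using key by simp
    finally show ?thesis by simp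
  qed
  show ?thesis
    unfolding G1 G0 RD by (rule lin_aux[OF Q])
qed

definition DS :: "complex \<Rightarrow> complex \<Rightarrow> complex \<Rightarrow> complex" where
  "DS a b c = suminf (dt a b c)"

lemma dt_summable:
  assumes l: "1 + a - b \<notin> \<int>\<^sub>\<le>\<^sub>0" "1 + a - c \<notin> \<int>\<^sub>\<le>\<^sub>0" and conv: "Re (a + 2 - 2*b - 2*c) > 0"
  shows "summable (dt a b c)"
proof -
  have "Re ((1 + a - b) + (1 + a - c) - a - b - c) > 0" using conv by simp
  from gt_summable[OF l this] show ?thesis unfolding dt_def[abs_def] by (rule summable_norm_cancel)
qed

lemma npi2: "x \<notin> \<int>\<^sub>\<le>\<^sub>0 \<Longrightarrow> 1 + (a + 2) - b \<notin> \<int>\<^sub>\<le>\<^sub>0" if "x = 1 + a - b" for x a b :: complex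
proof -
  assume "x \<notin> \<int>\<^sub>\<le>\<^sub>0"
  from npi_add_nat[OF this, of 2] show ?thesis using that by (simp add: algebra_simps)
qed

lemma rat_lim:
  fixes a b c :: complex
  assumes a0: "a \<noteq> 0" and s0: "a + 2 - 2*b - 2*c \<noteq> 0"
  shows "(\<lambda>M. NumF a b c (of_nat M) / (a*(a+2-2*b-2*c)) / ((1+a-b + of_nat M)*(1+a-c + of_nat M)))
     \<longlonglongrightarrow> (a + (a*(3+3*a-2*b-2*c)) * 0 + (NumF a b c 0) * 0) / (a*(a+2-2*b-2*c) * (((1+a-b)*0+1) * ((1+a-c)*0+1)))"
proof -
  define y where "y = (\<lambda>M::nat. 1 / (of_nat M :: complex))"
  have y0: "y \<longlonglongrightarrow> 0" unfolding y_def by (rule lim_1_over_n)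
  have "(\<lambda>M. (a + (a*(3+3*a-2*b-2*c)) * y M + (NumF a b c 0) * (y M * y M)) /
      (a*(a+2-2*b-2*c) * (((1+a-b) * y M + 1) * ((1+a-c) * y M + 1)))) \<longlonglongrightarrow>
      (a + (a*(3+3*a-2*b-2*c)) * 0 + (NumF a b c 0) * (0 * 0)) / (a*(a+2-2*b-2*c) * (((1+a-b)*0+1) * ((1+a-c)*0+1)))"
    using a0 s0 by (intro tendsto_intros y0) simp
  moreover have "eventually (\<lambda>M. (a + (a*(3+3*a-2*b-2*c)) * y M + (NumF a b c 0) * (y M * y M)) /
      (a*(a+2-2*b-2*c) * (((1+a-b) * y M + 1) * ((1+a-c) * y M + 1))) =
      NumF a b c (of_nat M) / (a*(a+2-2*b-2*c)) / ((1+a-b + of_nat M)*(1+a-c + of_nat M))) sequentially"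
    using eventually_gt_at_top[of 0]
  proof eventually_elim
    case (elim M)
    define m where "m = (of_nat M :: complex)"
    have m0: "m \<noteq> 0" using elim unfolding m_def by simp
    have ym: "y M = 1 / m" unfolding y_def m_def by simp
    have num: "NumF a b c m = m*m * (a + (a*(3+3*a-2*b-2*c)) * (1/m) + (NumF a b c 0) * ((1/m) * (1/m)))"
      using m0 unfolding NumF_def by (simp add: field_simps power2_eq_square)
    have den: "(1+a-b + m)*(1+a-c + m) = m*m * (((1+a-b) * (1/m) + 1) * ((1+a-c) * (1/m) + 1))"
      using m0 by (simp add: field_simps)
    show ?case unfolding ym m_def[symmetric] num den using m0 by simp
  qed
  ultimately show ?thesis by (simp add: tendsto_cong)
qed

lemma recur:
  assumes a0: "a \<noteq> 0" and l: "1 + a - b \<notin> \<int>\<^sub>\<le>\<^sub>0" "1 + a - c \<notin> \<int>\<^sub>\<le>\<^sub>0"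
    and conv: "Re (a + 2 - 2*b - 2*c) > 0"
  shows "DS a b c = Rr a b c * DS (a + 2) b c"
proof -
  have s0: "a + 2 - 2*b - 2*c \<noteq> 0"
  proof
    assume "a + 2 - 2*b - 2*c = 0"
    hence "Re (a + 2 - 2*b - 2*c) = 0" by (simp only: zero_complex.sel)
    with conv show False by linarith
  qed
  have l2: "1 + (a + 2) - b \<notin> \<int>\<^sub>\<le>\<^sub>0" "1 + (a + 2) - c \<notin> \<int>\<^sub>\<le>\<^sub>0"
    using npi2[OF refl l(1)] npi2[OF refl l(2)] by auto
  have conv2: "Re ((a + 2) + 2 - 2*b - 2*c) > 0" using conv by simp
  have sm1: "summable (dt a b c)" by (rule dt_summable[OF l conv])
  have sm2: "summable (dt (a + 2) b c)" by (rule dt_summable[OF l2 conv2])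
  have "Re ((1 + a - b) + (1 + a - c) - a - b - c) > 0" using conv by simp
  from gt_lim_n[OF l this] have L1: "(\<lambda>n. of_nat n * dt a b c n) \<longlonglongrightarrow> 0"
    unfolding dt_def .
  have "(\<lambda>M. (of_nat M * dt a b c M) * (NumF a b c (of_nat M) / (a*(a+2-2*b-2*c)) /
      ((1+a-b + of_nat M)*(1+a-c + of_nat M)))) \<longlonglongrightarrow> 0"
    using tendsto_mult[OF L1 rat_lim[OF a0 s0]] by simp
  hence GL: "Gc a b c \<longlonglongrightarrow> 0" unfolding Gc_def by (simp add: ac_simps)
  have "(\<lambda>n. Gc a b c (Suc n) - Gc a b c n) sums (0 - Gc a b c 0)"
    by (rule telescope_sums[OF GL])
  hence T: "(\<lambda>n. Rr a b c * dt (a + 2) b c n - dt a b c n) sums 0"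
    using tele[OF a0 l s0] by (simp add: Gc_def)
  have "(\<lambda>n. Rr a b c * dt (a + 2) b c n) sums (Rr a b c * DS (a + 2) b c)"
    unfolding DS_def by (intro sums_mult summable_sums sm2)
  from sums_diff[OF this T] have "dt a b c sums (Rr a b c * DS (a + 2) b c - 0)" by simp
  thus ?thesis unfolding DS_def by (simp add: sums_iff)
qed

lemma half_npi: "z / 2 \<in> \<int>\<^sub>\<le>\<^sub>0 \<Longrightarrow> z \<in> (\<int>\<^sub>\<le>\<^sub>0 :: complex set)"
proof -
  assume "z / 2 \<in> \<int>\<^sub>\<le>\<^sub>0"
  then obtain m where "z / 2 = - of_nat m" by (elim nonpos_Ints_cases')
  hence "z = - of_nat (2 * m)" by (simp add: field_simps)
  thus ?thesis by (simp only: minus_of_nat_in_nonpos_Ints)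
qed

lemma half_npi1: "(z + 1) / 2 \<in> \<int>\<^sub>\<le>\<^sub>0 \<Longrightarrow> z \<in> (\<int>\<^sub>\<le>\<^sub>0 :: complex set)"
proof -
  assume "(z + 1) / 2 \<in> \<int>\<^sub>\<le>\<^sub>0"
  then obtain m where "(z + 1) / 2 = - of_nat m" by (elim nonpos_Ints_cases')
  hence "z = - of_nat (2 * m + 1)" by (simp add: field_simps) algebra
  thus ?thesis by (simp only: minus_of_nat_in_nonpos_Ints)
qed

lemma Re_pos_npi: "Re z > 0 \<Longrightarrow> z \<notin> \<int>\<^sub>\<le>\<^sub>0"
  by (auto elim!: nonpos_Ints_cases')

lemma iter:
  assumes a0: "a \<noteq> 0" and h1: "1 + a/2 \<notin> \<int>\<^sub>\<le>\<^sub>0"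
    and l: "1 + a - b \<notin> \<int>\<^sub>\<le>\<^sub>0" "1 + a - c \<notin> \<int>\<^sub>\<le>\<^sub>0"
    and conv: "Re (a + 2 - 2*b - 2*c) > 0"
  shows "DS a b c = (\<Prod>j<N. Rr (a + 2 * of_nat j) b c) * DS (a + 2 * of_nat N) b c"
proof (induction N)
  case 0 thus ?case by simp
next
  case (Suc N)
  define a' where "a' = a + 2 * of_nat N"
  have a'0: "a' \<noteq> 0"
  proof
    assume "a' = 0"
    show False
    proof (cases N)
      case 0 with \<open>a' = 0\<close> a0 show False unfolding a'_def by simp
    next
      case (Suc M)
      have "1 + a/2 + of_nat M = a'/2" unfolding a'_def Suc by (simp add: field_simps)
      with \<open>a' = 0\<close> have "1 + a/2 = - of_nat M" by (simp add: eq_neg_iff_add_eq_0)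
      with h1 show False by (metis minus_of_nat_in_nonpos_Ints)
    qed
  qed
  have l': "1 + a' - b \<notin> \<int>\<^sub>\<le>\<^sub>0" "1 + a' - c \<notin> \<int>\<^sub>\<le>\<^sub>0"
    using npi_add_nat[OF l(1), of "2*N"] npi_add_nat[OF l(2), of "2*N"] unfolding a'_def
    by (simp_all add: algebra_simps)
  have conv': "Re (a' + 2 - 2*b - 2*c) > 0" using conv unfolding a'_def by simp
  have r: "DS a' b c = Rr a' b c * DS (a' + 2) b c" by (rule recur[OF a'0 l' conv'])
  have e: "a' + 2 = a + 2 * of_nat (Suc N)" unfolding a'_def by simp
  from Suc.IH have "DS a b c = (\<Prod>j<N. Rr (a + 2 * of_nat j) b c) * DS a' b c" unfolding a'_def .
  also have "\<dots> = (\<Prod>j<N. Rr (a + 2 * of_nat j) b c) * (Rr a' b c * DS (a + 2 * of_nat (Suc N)) b c)"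
    using r e by simp
  also have "\<dots> = (\<Prod>j<Suc N. Rr (a + 2 * of_nat j) b c) * DS (a + 2 * of_nat (Suc N)) b c"
    unfolding a'_def by (simp add: mult_ac)
  finally show ?case .
qed

lemma Rr_shift:
  fixes a b c :: complex
  shows "Rr (a + 2 * of_nat j) b c =
   ((1+a)/2 + of_nat j) * ((1+a/2-b) + of_nat j) * ((1+a/2-c) + of_nat j) * ((1+a-b-c)/2 + of_nat j) * ((2+a-b-c)/2 + of_nat j) /
   (((1+a-b)/2 + of_nat j) * ((2+a-b)/2 + of_nat j) * ((1+a-c)/2 + of_nat j) * ((2+a-c)/2 + of_nat j) * ((1+a/2-b-c) + of_nat j))"
proof -
  define x where "x = (of_nat j :: complex)"
  define A where "A = a + 2 * x"
  have n: "(1+A)*((2+A-2*b)*(2+A-2*c)*(1+A-b-c)*(2+A-b-c)) =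
     32 * (((1+a)/2 + x) * ((1+a/2-b) + x) * ((1+a/2-c) + x) * ((1+a-b-c)/2 + x) * ((2+a-b-c)/2 + x))"
    unfolding A_def by (simp add: field_simps)
  have d: "(1+A-b)*(2+A-b)*(1+A-c)*(2+A-c)*(A+2-2*b-2*c) =
     32 * (((1+a-b)/2 + x) * ((2+a-b)/2 + x) * ((1+a-c)/2 + x) * ((2+a-c)/2 + x) * ((1+a/2-b-c) + x))"
    unfolding A_def by (simp add: field_simps)
  show ?thesis unfolding Rr_def x_def[symmetric] A_def[symmetric] n d
    by (rule mult_divide_mult_cancel_left) simp
qed

lemma prod_poch: "(\<Prod>j<N. z + of_nat j) = pochhammer (z::complex) N"
  by (simp add: pochhammer_prod atLeast0LessThan)

lemma prod_Rr:
  fixes a b c :: complex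
  shows "(\<Prod>j<N. Rr (a + 2 * of_nat j) b c) =
   pochhammer ((1+a)/2) N * pochhammer (1+a/2-b) N * pochhammer (1+a/2-c) N * pochhammer ((1+a-b-c)/2) N * pochhammer ((2+a-b-c)/2) N /
   (pochhammer ((1+a-b)/2) N * pochhammer ((2+a-b)/2) N * pochhammer ((1+a-c)/2) N * pochhammer ((2+a-c)/2) N * pochhammer (1+a/2-b-c) N)"
  unfolding Rr_shift prod_dividef prod.distrib prod_poch ..

lemma ratio5:
  assumes "x1+x2+x3+x4+x5 = y1+y2+y3+y4+y5"
  shows "pochhammer x1 N * pochhammer x2 N * pochhammer x3 N * pochhammer x4 N * pochhammer x5 N /
     (pochhammer y1 N * pochhammer y2 N * pochhammer y3 N * pochhammer y4 N * pochhammer y5 N) =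
     ps x1 N * ps x2 N * ps x3 N * ps x4 N * ps x5 N / (ps y1 N * ps y2 N * ps y3 N * ps y4 N * ps y5 N)"
proof -
  define F where "F = (fact N :: complex)"
  have F0: "F \<noteq> 0" unfolding F_def by simp
  have E: "ex (x1-1) N * ex (x2-1) N * ex (x3-1) N * ex (x4-1) N * ex (x5-1) N =
           ex (y1-1) N * ex (y2-1) N * ex (y3-1) N * ex (y4-1) N * ex (y5-1) N"
  proof -
    have "ex (x1-1) N * ex (x2-1) N * ex (x3-1) N * ex (x4-1) N * ex (x5-1) N = ex (x1+x2+x3+x4+x5-5) N"
      unfolding ex_add[symmetric] by (simp add: algebra_simps)
    also have "\<dots> = ex (y1+y2+y3+y4+y5-5) N" using assms by simp
    also have "\<dots> = ex (y1-1) N * ex (y2-1) N * ex (y3-1) N * ex (y4-1) N * ex (y5-1) N"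
      unfolding ex_add[symmetric] by (simp add: algebra_simps)
    finally show ?thesis .
  qed
  have aux: "(A / K) / (B / K) = A / B" if "K \<noteq> 0" for A B K :: complex
    using that by (cases "B = 0") (simp_all add: field_simps)
  have "ps x1 N * ps x2 N * ps x3 N * ps x4 N * ps x5 N =
     (pochhammer x1 N * pochhammer x2 N * pochhammer x3 N * pochhammer x4 N * pochhammer x5 N) /
     (F^5 * (ex (x1-1) N * ex (x2-1) N * ex (x3-1) N * ex (x4-1) N * ex (x5-1) N))"
    unfolding ps_def F_def by (simp add: times_divide_times_eq eval_nat_numeral ac_simps)
  moreover have "ps y1 N * ps y2 N * ps y3 N * ps y4 N * ps y5 N =
     (pochhammer y1 N * pochhammer y2 N * pochhammer y3 N * pochhammer y4 N * pochhammer y5 N) /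
     (F^5 * (ex (y1-1) N * ex (y2-1) N * ex (y3-1) N * ex (y4-1) N * ex (y5-1) N))"
    unfolding ps_def F_def by (simp add: times_divide_times_eq eval_nat_numeral ac_simps)
  ultimately show ?thesis unfolding E using F0 by (simp add: aux ex_nz)
qed

lemma phi_lim: "((\<lambda>N::nat. (r + 2 * real N + j + m) / ((r + 2 * real N + j + bb) * (r + 2 * real N + j + g))) \<longlongrightarrow> 0) sequentially"
  by real_asymp

lemma poch_nonneg: "(x::real) \<ge> 0 \<Longrightarrow> pochhammer x n \<ge> 0"
  by (induction n) (auto simp: pochhammer_Suc intro!: mult_nonneg_nonneg)

lemma norm_poch_le: "norm (pochhammer (z::complex) k) \<le> pochhammer (norm z) k"
proof (induction k)
  case (Suc k)
  have "norm (z + of_nat k) \<le> norm z + real k" using norm_triangle_ineq[of z "of_nat k"] by simp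
  hence "norm (pochhammer z k) * norm (z + of_nat k) \<le> pochhammer (norm z) k * (norm z + real k)"
    using Suc.IH by (intro mult_mono) (auto intro: poch_nonneg)
  thus ?case by (simp add: pochhammer_Suc norm_mult)
qed simp

lemma norm_poch_le2: "Re z \<ge> 0 \<Longrightarrow> norm (pochhammer (z::complex) k) \<le> pochhammer (Re z + \<bar>Im z\<bar>) k"
proof (induction k)
  case (Suc k)
  have "norm (z + of_nat k) \<le> \<bar>Re (z + of_nat k)\<bar> + \<bar>Im (z + of_nat k)\<bar>" by (rule cmod_le)
  also have "\<dots> = Re z + \<bar>Im z\<bar> + real k" using Suc.prems by simp
  finally have "norm (pochhammer z k) * norm (z + of_nat k) \<le> pochhammer (Re z + \<bar>Im z\<bar>) k * (Re z + \<bar>Im z\<bar> + real k)"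
    using Suc by (intro mult_mono) (auto intro: poch_nonneg)
  thus ?case by (simp add: pochhammer_Suc norm_mult)
qed simp

lemma norm_poch_ge: "Re w > 0 \<Longrightarrow> pochhammer (Re w) k \<le> norm (pochhammer (w::complex) k)"
proof (induction k)
  case (Suc k)
  have "Re w + real k \<le> norm (w + of_nat k)" using complex_Re_le_cmod[of "w + of_nat k"] by simp
  hence "pochhammer (Re w) k * (Re w + real k) \<le> norm (pochhammer w k) * norm (w + of_nat k)"
    using Suc by (intro mult_mono) (auto intro: poch_nonneg)
  thus ?case by (simp add: pochhammer_Suc norm_mult)
qed simp

definition Tb :: "real \<Rightarrow> real \<Rightarrow> real \<Rightarrow> real \<Rightarrow> real \<Rightarrow> real \<Rightarrow> nat \<Rightarrow> real" where
  "Tb u m B C \<beta> \<gamma> k = pochhammer (u + m) k * pochhammer B k * pochhammer C k /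
     (pochhammer (u + \<beta>) k * pochhammer (u + \<gamma>) k * fact k)"

lemma dt_le_Tb:
  assumes "Re x \<ge> 0" "Re x + (1 - Re b) > 0" "Re x + (1 - Re c) > 0"
  shows "norm (dt x b c k) \<le> Tb (Re x) \<bar>Im x\<bar> (norm b) (norm c) (1 - Re b) (1 - Re c) k"
proof -
  have r1: "Re (1 + x - b) = Re x + (1 - Re b)" "Re (1 + x - c) = Re x + (1 - Re c)" by simp_all
  have g1: "pochhammer (Re x + (1 - Re b)) k > 0" "pochhammer (Re x + (1 - Re c)) k > 0"
    using assms by (auto intro: pochhammer_pos)
  have "norm (dt x b c k) = norm (pochhammer x k) * norm (pochhammer b k) * norm (pochhammer c k) /
      (norm (pochhammer (1 + x - b) k) * norm (pochhammer (1 + x - c) k) * fact k)"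
    unfolding dt_def gt_def by (simp add: norm_mult norm_divide)
  also have "\<dots> \<le> pochhammer (Re x + \<bar>Im x\<bar>) k * pochhammer (norm b) k * pochhammer (norm c) k /
      (pochhammer (Re x + (1 - Re b)) k * pochhammer (Re x + (1 - Re c)) k * fact k)"
  proof (rule frac_le)
    show "0 \<le> pochhammer (Re x + \<bar>Im x\<bar>) k * pochhammer (norm b) k * pochhammer (norm c) k"
      using assms by (auto intro!: mult_nonneg_nonneg poch_nonneg)
    show "norm (pochhammer x k) * norm (pochhammer b k) * norm (pochhammer c k) \<le>
        pochhammer (Re x + \<bar>Im x\<bar>) k * pochhammer (norm b) k * pochhammer (norm c) k"
      using assms by (intro mult_mono norm_poch_le norm_poch_le2) (auto intro!: mult_nonneg_nonneg poch_nonneg)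
    show "0 < pochhammer (Re x + (1 - Re b)) k * pochhammer (Re x + (1 - Re c)) k * fact k"
      using g1 by simp
    show "pochhammer (Re x + (1 - Re b)) k * pochhammer (Re x + (1 - Re c)) k * fact k \<le>
        norm (pochhammer (1 + x - b) k) * norm (pochhammer (1 + x - c) k) * fact k"
      using norm_poch_ge[of "1 + x - b" k] norm_poch_ge[of "1 + x - c" k] assms g1 unfolding r1
      by (intro mult_right_mono mult_mono) auto
  qed
  finally show ?thesis unfolding Tb_def .
qed

lemma Tb_as_prod:
  "Tb u m B C \<beta> \<gamma> k = (\<Prod>j<k. (u + real j + m) / ((u + real j + \<beta>) * (u + real j + \<gamma>))) *
      (pochhammer B k * pochhammer C k / fact k)"
proof -
  have p: "pochhammer (x::real) k = (\<Prod>j<k. x + real j)" for x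
    by (simp add: pochhammer_prod atLeast0LessThan)
  have "(\<Prod>j<k. (u + real j + m) / ((u + real j + \<beta>) * (u + real j + \<gamma>))) =
      pochhammer (u + m) k / (pochhammer (u + \<beta>) k * pochhammer (u + \<gamma>) k)"
    unfolding p prod_dividef prod.distrib by (simp add: add_ac)
  thus ?thesis unfolding Tb_def by (simp add: times_divide_times_eq ac_simps)
qed

lemma phi_mono:
  fixes m \<beta> \<gamma> v v' :: real
  assumes m: "m \<ge> 0" and v0: "1 + \<bar>\<beta>\<bar> + \<bar>\<gamma>\<bar> + \<bar>\<beta> * \<gamma>\<bar> + m * \<bar>\<beta> + \<gamma>\<bar> \<le> v" and vv: "v \<le> v'"
  shows "0 \<le> (v' + m) / ((v' + \<beta>) * (v' + \<gamma>))"
    and "(v' + m) / ((v' + \<beta>) * (v' + \<gamma>)) \<le> (v + m) / ((v + \<beta>) * (v + \<gamma>))"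
proof -
  have b1: "v + \<beta> \<ge> 1" "v + \<gamma> \<ge> 1" "v' + \<beta> \<ge> 1" "v' + \<gamma> \<ge> 1" "v \<ge> 1"
    using v0 vv abs_ge_self[of \<beta>] abs_ge_minus_self[of \<beta>] abs_ge_self[of \<gamma>] abs_ge_minus_self[of \<gamma>]
      abs_ge_zero[of "\<beta>*\<gamma>"] mult_nonneg_nonneg[OF m abs_ge_zero[of "\<beta>+\<gamma>"]] by linarith+
  show "0 \<le> (v' + m) / ((v' + \<beta>) * (v' + \<gamma>))" using b1 m vv by (intro divide_nonneg_pos mult_pos_pos) auto
  have "v * v' \<ge> v * 1" using b1 vv by (intro mult_left_mono) auto
  hence vv': "v * v' \<ge> 1 + \<bar>\<beta>\<bar> + \<bar>\<gamma>\<bar> + \<bar>\<beta> * \<gamma>\<bar> + m * \<bar>\<beta> + \<gamma>\<bar>" using v0 by linarith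
  have m1: "m * (\<beta> + \<gamma>) \<ge> - (m * \<bar>\<beta> + \<gamma>\<bar>)"
    using mult_left_mono[OF abs_ge_minus_self[of "\<beta>+\<gamma>"] m] by (simp add: algebra_simps)
  have m2: "m * (v + v') \<ge> 0" using m b1 vv by (intro mult_nonneg_nonneg) auto
  have p: "v * v' + m * (v + v') + m * (\<beta> + \<gamma>) - \<beta> * \<gamma> \<ge> 0"
    using vv' m1 m2 abs_ge_self[of "\<beta>*\<gamma>"] by linarith
  have key: "(v + m) * ((v' + \<beta>) * (v' + \<gamma>)) - (v' + m) * ((v + \<beta>) * (v + \<gamma>)) =
      (v' - v) * (v * v' + m * (v + v') + m * (\<beta> + \<gamma>) - \<beta> * \<gamma>)"
    by (simp add: algebra_simps)
  have "(v' - v) * (v * v' + m * (v + v') + m * (\<beta> + \<gamma>) - \<beta> * \<gamma>) \<ge> 0"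
    using vv p by simp
  hence le: "(v' + m) * ((v + \<beta>) * (v + \<gamma>)) \<le> (v + m) * ((v' + \<beta>) * (v' + \<gamma>))"
    using key by linarith
  have pos: "(v + \<beta>) * (v + \<gamma>) > 0" "(v' + \<beta>) * (v' + \<gamma>) > 0" using b1 by simp_all
  show "(v' + m) / ((v' + \<beta>) * (v' + \<gamma>)) \<le> (v + m) / ((v + \<beta>) * (v + \<gamma>))"
    using le pos by (simp add: divide_simps)
qed

lemma Tb_mono:
  assumes m: "m \<ge> 0" "B \<ge> 0" "C \<ge> 0"
    and v0: "1 + \<bar>\<beta>\<bar> + \<bar>\<gamma>\<bar> + \<bar>\<beta> * \<gamma>\<bar> + m * \<bar>\<beta> + \<gamma>\<bar> \<le> u0" and uu: "u0 \<le> u"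
  shows "Tb u m B C \<beta> \<gamma> k \<le> Tb u0 m B C \<beta> \<gamma> k"
proof -
  have "(\<Prod>j<k. (u + real j + m) / ((u + real j + \<beta>) * (u + real j + \<gamma>))) \<le>
        (\<Prod>j<k. (u0 + real j + m) / ((u0 + real j + \<beta>) * (u0 + real j + \<gamma>)))"
  proof (rule prod_mono, rule conjI)
    fix j assume "j \<in> {..<k}"
    have v0': "1 + \<bar>\<beta>\<bar> + \<bar>\<gamma>\<bar> + \<bar>\<beta> * \<gamma>\<bar> + m * \<bar>\<beta> + \<gamma>\<bar> \<le> u0 + real j" using v0 by simp
    have uu': "u0 + real j \<le> u + real j" using uu by simp
    show "0 \<le> (u + real j + m) / ((u + real j + \<beta>) * (u + real j + \<gamma>))"
      by (rule phi_mono(1)[OF m(1) v0' uu'])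
    show "(u + real j + m) / ((u + real j + \<beta>) * (u + real j + \<gamma>)) \<le>
          (u0 + real j + m) / ((u0 + real j + \<beta>) * (u0 + real j + \<gamma>))"
      by (rule phi_mono(2)[OF m(1) v0' uu'])
  qed
  moreover have "pochhammer B k * pochhammer C k / fact k \<ge> 0"
    using m by (auto intro!: divide_nonneg_pos mult_nonneg_nonneg poch_nonneg)
  ultimately show ?thesis unfolding Tb_as_prod by (rule mult_right_mono)
qed

lemma Tb_nonneg:
  assumes "u + m \<ge> 0" "B \<ge> 0" "C \<ge> 0" "u + \<beta> > 0" "u + \<gamma> > 0"
  shows "Tb u m B C \<beta> \<gamma> k \<ge> 0"
  unfolding Tb_def using assms by (auto intro!: divide_nonneg_pos mult_nonneg_nonneg poch_nonneg mult_pos_pos pochhammer_pos)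

lemma Tb_summable:
  assumes "u + m \<ge> 0" "B \<ge> 0" "C \<ge> 0" "u + \<beta> > 0" "u + \<gamma> > 0" "u + \<beta> + \<gamma> - m - B - C > 0"
  shows "summable (Tb u m B C \<beta> \<gamma>)"
proof -
  have e: "gt (of_real (u + m)) (of_real B) (of_real C) (of_real (u + \<beta>)) (of_real (u + \<gamma>)) k =
      of_real (Tb u m B C \<beta> \<gamma> k)" for k
    by (simp only: gt_def Tb_def of_real_divide of_real_mult pochhammer_of_real of_real_fact)
  have npi: "of_real (u + \<beta>) \<notin> (\<int>\<^sub>\<le>\<^sub>0 :: complex set)" "of_real (u + \<gamma>) \<notin> (\<int>\<^sub>\<le>\<^sub>0 :: complex set)"
    using assms by (auto intro!: Re_pos_npi)
  have "Re (of_real (u + \<beta>) + of_real (u + \<gamma>) - of_real (u + m) - of_real B - of_real C) > 0"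
    using assms(6) by simp
  from gt_summable[OF npi this] have "summable (\<lambda>k. norm (of_real (Tb u m B C \<beta> \<gamma> k) :: complex))"
    unfolding e .
  moreover have "norm (of_real (Tb u m B C \<beta> \<gamma> k) :: complex) = Tb u m B C \<beta> \<gamma> k" for k
    using Tb_nonneg[OF assms(1-5), of k] by simp
  ultimately show ?thesis by simp
qed

lemma Tb_lim0:
  assumes "k \<ge> 1"
  shows "(\<lambda>N. Tb (r + 2 * real N) m B C \<beta> \<gamma> k) \<longlonglongrightarrow> 0"
proof -
  have "(\<lambda>N. (\<Prod>j<k. (r + 2 * real N + real j + m) / ((r + 2 * real N + real j + \<beta>) * (r + 2 * real N + real j + \<gamma>))))
      \<longlonglongrightarrow> (\<Prod>j<k. 0)" (is "?f \<longlonglongrightarrow> _")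
    by (intro tendsto_prod phi_lim)
  moreover have z: "(\<Prod>j<k. (0::real)) = 0" using assms by (simp add: prod_zero_iff) 
  ultimately have L0: "?f \<longlonglongrightarrow> 0" by (simp only: z)
  have "(\<lambda>N. (\<Prod>j<k. (r + 2 * real N + real j + m) / ((r + 2 * real N + real j + \<beta>) * (r + 2 * real N + real j + \<gamma>)))
      * (pochhammer B k * pochhammer C k / fact k)) \<longlonglongrightarrow> 0 * (pochhammer B k * pochhammer C k / fact k)"
    by (intro tendsto_mult L0 tendsto_const)
  thus ?thesis unfolding Tb_as_prod by simp
qed

lemma DS_lim:
  assumes l: "1 + a - b \<notin> \<int>\<^sub>\<le>\<^sub>0" "1 + a - c \<notin> \<int>\<^sub>\<le>\<^sub>0"
  shows "(\<lambda>N. DS (a + 2 * of_nat N) b c) \<longlonglongrightarrow> 1"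
proof -
  define r where "r = Re a"
  define m where "m = \<bar>Im a\<bar>"
  define B where "B = norm b"
  define C where "C = norm c"
  define \<beta> where "\<beta> = 1 - Re b"
  define \<gamma> where "\<gamma> = 1 - Re c"
  define v0 where "v0 = 1 + \<bar>\<beta>\<bar> + \<bar>\<gamma>\<bar> + \<bar>\<beta> * \<gamma>\<bar> + m * \<bar>\<beta> + \<gamma>\<bar>"
  define u0 where "u0 = v0 + m + B + C"
  have mBC: "m \<ge> 0" "B \<ge> 0" "C \<ge> 0" unfolding m_def B_def C_def by auto
  have v01: "v0 \<ge> 1 + \<bar>\<beta>\<bar> + \<bar>\<gamma>\<bar>" unfolding v0_def using mBC by simp
  have u0v0: "v0 \<le> u0" unfolding u0_def using mBC by simp
  have u0c: "u0 + m \<ge> 0" "u0 + \<beta> > 0" "u0 + \<gamma> > 0" "u0 + \<beta> + \<gamma> - m - B - C > 0"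
    using v01 mBC unfolding u0_def by (auto simp: abs_if split: if_splits)
  define M where "M = Tb u0 m B C \<beta> \<gamma>"
  have sM: "summable M" unfolding M_def by (rule Tb_summable[OF u0c(1) mBC(2,3) u0c(2-4)])
  define N0 where "N0 = nat (ceiling (\<bar>u0\<bar> + \<bar>r\<bar>))"
  have big: "u0 \<le> r + 2 * real N" if "N \<ge> N0" for N
  proof -
    have "real N \<ge> \<bar>u0\<bar> + \<bar>r\<bar>" using that unfolding N0_def by linarith
    thus ?thesis by (auto simp: abs_if split: if_splits)
  qed
  have bnd: "norm (dt (a + 2 * of_nat N) b c k) \<le> Tb (r + 2 * real N) m B C \<beta> \<gamma> k" if "N \<ge> N0" for N k
  proof -
    have ge: "u0 \<le> Re (a + 2 * of_nat N)" using big[OF that] unfolding r_def by simp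
    have "Re (a + 2 * of_nat N) \<ge> 0" "Re (a + 2 * of_nat N) + (1 - Re b) > 0" "Re (a + 2 * of_nat N) + (1 - Re c) > 0"
      using ge u0v0 v01 u0c unfolding \<beta>_def[symmetric] \<gamma>_def[symmetric] by (auto simp: abs_if split: if_splits)
    from dt_le_Tb[OF this, of k] show ?thesis unfolding r_def m_def B_def C_def \<beta>_def \<gamma>_def by simp
  qed
  have bnd2: "norm (dt (a + 2 * of_nat N) b c k) \<le> M k" if "N \<ge> N0" for N k
  proof -
    have "Tb (r + 2 * real N) m B C \<beta> \<gamma> k \<le> Tb u0 m B C \<beta> \<gamma> k"
      by (rule Tb_mono[OF mBC _ big[OF that]]) (simp add: v0_def[symmetric] u0v0)
    with bnd[OF that, of k] show ?thesis unfolding M_def by linarith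
  qed
  have lim: "(\<lambda>N. dt (a + 2 * of_nat N) b c k) \<longlonglongrightarrow> (if k = 0 then 1 else 0)" for k
  proof (cases "k = 0")
    case True thus ?thesis by (simp add: dt_def gt_def)
  next
    case False
    have L: "(\<lambda>N. Tb (r + 2 * real N) m B C \<beta> \<gamma> k) \<longlonglongrightarrow> 0" using False by (intro Tb_lim0) simp
    have E: "eventually (\<lambda>N. norm (dt (a + 2 * of_nat N) b c k) \<le> Tb (r + 2 * real N) m B C \<beta> \<gamma> k) sequentially"
      using eventually_ge_at_top[of N0] by eventually_elim (rule bnd)
    have "(\<lambda>N. dt (a + 2 * of_nat N) b c k) \<longlonglongrightarrow> 0"
      by (rule Lim_null_comparison[OF E L])
    thus ?thesis using False by simp
  qed
  have ev: "eventually (\<lambda>(k, N). norm (dt (a + 2 * of_nat N) b c k) \<le> M k) (at_top \<times>\<^sub>F sequentially)"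
  proof -
    have "eventually (\<lambda>x. (\<lambda>k. True) (fst x) \<and> (\<lambda>N. N \<ge> N0) (snd x)) (at_top \<times>\<^sub>F sequentially)"
      by (rule eventually_prodI) (auto simp: eventually_ge_at_top)
    thus ?thesis by eventually_elim (auto intro: bnd2)
  qed
  have T: "(\<lambda>N. suminf (\<lambda>k. dt (a + 2 * of_nat N) b c k)) \<longlonglongrightarrow> suminf (\<lambda>k. if k = 0 then (1::complex) else 0)"
    using tannerys_theorem[OF lim ev sM] by simp
  have "suminf (\<lambda>k. if k = 0 then (1::complex) else 0) = 1"
    using sums_single[of 0 "\<lambda>_. (1::complex)"] by (simp add: sums_iff)
  with T show ?thesis unfolding DS_def by simp
qed

lemma prod_lim:
  assumes l: "1 + a - b \<notin> \<int>\<^sub>\<le>\<^sub>0" "1 + a - c \<notin> \<int>\<^sub>\<le>\<^sub>0" and conv: "Re (a + 2 - 2*b - 2*c) > 0"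
  shows "(\<lambda>N. \<Prod>j<N. Rr (a + 2 * of_nat j) b c) \<longlonglongrightarrow>
    rGamma ((1+a)/2) * rGamma (1+a/2-b) * rGamma (1+a/2-c) * rGamma ((1+a-b-c)/2) * rGamma ((2+a-b-c)/2) /
    (rGamma ((1+a-b)/2) * rGamma ((2+a-b)/2) * rGamma ((1+a-c)/2) * rGamma ((2+a-c)/2) * rGamma (1+a/2-b-c))"
proof -
  have sum: "(1+a)/2 + (1+a/2-b) + (1+a/2-c) + (1+a-b-c)/2 + (2+a-b-c)/2 =
      (1+a-b)/2 + (2+a-b)/2 + (1+a-c)/2 + (2+a-c)/2 + (1+a/2-b-c)" by (simp add: field_simps)
  have n1: "(1+a-b)/2 \<notin> \<int>\<^sub>\<le>\<^sub>0" "(1+a-c)/2 \<notin> \<int>\<^sub>\<le>\<^sub>0" using l half_npi by blast+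
  have e2: "(2+a-b)/2 = ((1+a-b)+1)/2" "(2+a-c)/2 = ((1+a-c)+1)/2" by simp_all
  have n2: "(2+a-b)/2 \<notin> \<int>\<^sub>\<le>\<^sub>0" "(2+a-c)/2 \<notin> \<int>\<^sub>\<le>\<^sub>0"
    unfolding e2 using l(1) half_npi1[of "1+a-b"] l(2) half_npi1[of "1+a-c"] by blast+
  have n3: "1+a/2-b-c \<notin> \<int>\<^sub>\<le>\<^sub>0" using conv by (intro Re_pos_npi) simp
  have L1: "(\<lambda>N. ps ((1+a)/2) N * ps (1+a/2-b) N * ps (1+a/2-c) N * ps ((1+a-b-c)/2) N * ps ((2+a-b-c)/2) N)
     \<longlonglongrightarrow> rGamma ((1+a)/2) * rGamma (1+a/2-b) * rGamma (1+a/2-c) * rGamma ((1+a-b-c)/2) * rGamma ((2+a-b-c)/2)"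
    by (intro tendsto_mult ps_lim')
  have L2: "(\<lambda>N. ps ((1+a-b)/2) N * ps ((2+a-b)/2) N * ps ((1+a-c)/2) N * ps ((2+a-c)/2) N * ps (1+a/2-b-c) N)
     \<longlonglongrightarrow> rGamma ((1+a-b)/2) * rGamma ((2+a-b)/2) * rGamma ((1+a-c)/2) * rGamma ((2+a-c)/2) * rGamma (1+a/2-b-c)"
    by (intro tendsto_mult ps_lim')
  have nz: "rGamma ((1+a-b)/2) * rGamma ((2+a-b)/2) * rGamma ((1+a-c)/2) * rGamma ((2+a-c)/2) * rGamma (1+a/2-b-c) \<noteq> 0"
    using n1 n2 n3 by (simp only: mult_eq_0_iff rGamma_eq_zero_iff) simp
  show ?thesis unfolding prod_Rr ratio5[OF sum] by (rule tendsto_divide[OF L1 L2 nz])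
qed

lemma dixon_half:
  assumes a0: "a \<noteq> 0" and h1: "1 + a/2 \<notin> \<int>\<^sub>\<le>\<^sub>0"
    and l: "1 + a - b \<notin> \<int>\<^sub>\<le>\<^sub>0" "1 + a - c \<notin> \<int>\<^sub>\<le>\<^sub>0"
    and conv: "Re (a + 2 - 2*b - 2*c) > 0"
  shows "DS a b c = 
    rGamma ((1+a)/2) * rGamma (1+a/2-b) * rGamma (1+a/2-c) * rGamma ((1+a-b-c)/2) * rGamma ((2+a-b-c)/2) /
    (rGamma ((1+a-b)/2) * rGamma ((2+a-b)/2) * rGamma ((1+a-c)/2) * rGamma ((2+a-c)/2) * rGamma (1+a/2-b-c))"
proof -
  have L: "(\<lambda>N. (\<Prod>j<N. Rr (a + 2 * of_nat j) b c) * DS (a + 2 * of_nat N) b c) \<longlonglongrightarrow>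
    rGamma ((1+a)/2) * rGamma (1+a/2-b) * rGamma (1+a/2-c) * rGamma ((1+a-b-c)/2) * rGamma ((2+a-b-c)/2) /
    (rGamma ((1+a-b)/2) * rGamma ((2+a-b)/2) * rGamma ((1+a-c)/2) * rGamma ((2+a-c)/2) * rGamma (1+a/2-b-c)) * 1"
    by (intro tendsto_mult prod_lim[OF l conv] DS_lim[OF l])
  have E: "(\<lambda>N. (\<Prod>j<N. Rr (a + 2 * of_nat j) b c) * DS (a + 2 * of_nat N) b c) = (\<lambda>N. DS a b c)"
    by (rule ext, rule iter[OF a0 h1 l conv, symmetric])
  from L have "(\<lambda>N. DS a b c) \<longlonglongrightarrow>
    rGamma ((1+a)/2) * rGamma (1+a/2-b) * rGamma (1+a/2-c) * rGamma ((1+a-b-c)/2) * rGamma ((2+a-b-c)/2) /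
    (rGamma ((1+a-b)/2) * rGamma ((2+a-b)/2) * rGamma ((1+a-c)/2) * rGamma ((2+a-c)/2) * rGamma (1+a/2-b-c)) * 1"
    unfolding E .
  thus ?thesis by (simp only: LIMSEQ_const_iff mult_1_right)
qed

definition Dd :: "complex \<Rightarrow> complex" where
  "Dd z = exp ((1 - 2*z) * of_real (ln 2)) * of_real (sqrt pi)"

lemma Dd_nz: "Dd z \<noteq> 0" unfolding Dd_def by simp

lemma dup_all: "Gamma z * Gamma (z + 1/2) = Dd z * Gamma (2*z)"
proof (cases "z \<notin> \<int>\<^sub>\<le>\<^sub>0 \<and> z + 1/2 \<notin> \<int>\<^sub>\<le>\<^sub>0")
  case True thus ?thesis unfolding Dd_def using Gamma_legendre_duplication[of z] by auto
next
  case False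
  hence "Gamma z * Gamma (z + 1/2) = 0" by (auto simp: Gamma_eq_zero_iff)
  moreover have "2 * z \<in> \<int>\<^sub>\<le>\<^sub>0"
  proof (cases "z \<in> \<int>\<^sub>\<le>\<^sub>0")
    case True
    then obtain m where "z = - of_nat m" by (elim nonpos_Ints_cases')
    hence "2 * z = - of_nat (2*m)" by simp
    thus ?thesis by (simp only: minus_of_nat_in_nonpos_Ints)
  next
    case False
    with \<open>\<not> (z \<notin> \<int>\<^sub>\<le>\<^sub>0 \<and> z + 1/2 \<notin> \<int>\<^sub>\<le>\<^sub>0)\<close> have "z + 1/2 \<in> \<int>\<^sub>\<le>\<^sub>0" by blast
    then obtain m where "z + 1/2 = - of_nat m" by (elim nonpos_Ints_cases')
    hence "2 * z = - of_nat (2*m + 1)" by (simp add: field_simps) algebra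
    thus ?thesis by (simp only: minus_of_nat_in_nonpos_Ints)
  qed
  hence "Gamma (2*z) = 0" by (simp add: Gamma_eq_zero_iff)
  ultimately show ?thesis by simp
qed

lemma Dd_mult: "Dd x * Dd y = exp (((1-2*x) + (1-2*y)) * of_real (ln 2)) * (of_real (sqrt pi) * of_real (sqrt pi))"
  unfolding Dd_def distrib_right exp_add by (simp add: ac_simps)

lemma Dd_rel: "Dd ((1+a-b)/2) * Dd ((1+a-c)/2) = Dd ((1+a)/2) * Dd ((1+a-b-c)/2)"
proof -
  have "(1 - 2*((1+a-b)/2)) + (1 - 2*((1+a-c)/2)) = (1 - 2*((1+a)/2)) + (1 - 2*((1+a-b-c)/2))"
    by (simp add: field_simps)
  thus ?thesis unfolding Dd_mult by simp
qed

lemma dup2: "Gamma (w/2) * Gamma ((w+1)/2) = Dd (w/2) * Gamma w"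
proof -
  have e1: "w/2 + 1/2 = (w+1)/2" and e2: "2 * (w/2) = w" by (simp_all add: field_simps)
  show ?thesis using dup_all[of "w/2"] unfolding e1 e2 .
qed

lemma dixon_std_nz:
  assumes a0: "a \<noteq> 0" and h1: "1 + a/2 \<notin> \<int>\<^sub>\<le>\<^sub>0"
    and l: "1 + a - b \<notin> \<int>\<^sub>\<le>\<^sub>0" "1 + a - c \<notin> \<int>\<^sub>\<le>\<^sub>0"
    and conv: "Re (a + 2 - 2*b - 2*c) > 0"
  shows "DS a b c = Gamma (1+a/2) * Gamma (1+a-b) * Gamma (1+a-c) * Gamma (1+a/2-b-c) /
      (Gamma (1+a) * Gamma (1+a/2-b) * Gamma (1+a/2-c) * Gamma (1+a-b-c))"
proof -
  have e1: "Gamma ((1+a-b)/2) * Gamma ((2+a-b)/2) = Dd ((1+a-b)/2) * Gamma (1+a-b)"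
  proof -
    have e: "((1+a-b)+1)/2 = (2+a-b)/2" by (simp add: field_simps)
    show ?thesis using dup2[of "1+a-b"] unfolding e .
  qed
  have e2: "Gamma ((1+a-c)/2) * Gamma ((2+a-c)/2) = Dd ((1+a-c)/2) * Gamma (1+a-c)"
  proof -
    have e: "((1+a-c)+1)/2 = (2+a-c)/2" by (simp add: field_simps)
    show ?thesis using dup2[of "1+a-c"] unfolding e .
  qed
  have e3: "Gamma ((1+a-b-c)/2) * Gamma ((2+a-b-c)/2) = Dd ((1+a-b-c)/2) * Gamma (1+a-b-c)"
  proof -
    have e: "((1+a-b-c)+1)/2 = (2+a-b-c)/2" by (simp add: field_simps)
    show ?thesis using dup2[of "1+a-b-c"] unfolding e .
  qed
  have e4: "Gamma ((1+a)/2) * Gamma (1+a/2) = Dd ((1+a)/2) * Gamma (1+a)"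
  proof -
    have e: "((1+a)+1)/2 = 1+a/2" by (simp add: field_simps)
    show ?thesis using dup2[of "1+a"] unfolding e .
  qed
  have H: "Gamma (1+a/2) \<noteq> 0" using h1 by (simp add: Gamma_eq_zero_iff)
  have "DS a b c = (Gamma ((1+a-b)/2) * Gamma ((2+a-b)/2)) * (Gamma ((1+a-c)/2) * Gamma ((2+a-c)/2)) * Gamma (1+a/2-b-c) /
      (Gamma ((1+a)/2) * Gamma (1+a/2-b) * Gamma (1+a/2-c) * (Gamma ((1+a-b-c)/2) * Gamma ((2+a-b-c)/2)))"
    unfolding dixon_half[OF a0 h1 l conv] rGamma_inverse_Gamma
    by (simp add: field_simps)
  also have "\<dots> = (Dd ((1+a-b)/2) * Gamma (1+a-b)) * (Dd ((1+a-c)/2) * Gamma (1+a-c)) * Gamma (1+a/2-b-c) /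
      (Gamma ((1+a)/2) * Gamma (1+a/2-b) * Gamma (1+a/2-c) * (Dd ((1+a-b-c)/2) * Gamma (1+a-b-c)))"
    unfolding e1 e2 e3 ..
  also have "\<dots> = Gamma (1+a/2) * Gamma (1+a-b) * Gamma (1+a-c) * Gamma (1+a/2-b-c) /
      (((Gamma ((1+a)/2) * Gamma (1+a/2)) / Dd ((1+a)/2)) * Gamma (1+a/2-b) * Gamma (1+a/2-c) * Gamma (1+a-b-c))"
  proof (cases "Gamma ((1+a)/2) * Gamma (1+a/2-b) * Gamma (1+a/2-c) * Gamma (1+a-b-c) = 0")
    case True thus ?thesis by auto
  next
    case False
    thus ?thesis using H Dd_nz[of "(1+a)/2"] Dd_nz[of "(1+a-b-c)/2"] Dd_rel[of a b c]
      by (simp add: field_simps)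
  qed
  also have "(Gamma ((1+a)/2) * Gamma (1+a/2)) / Dd ((1+a)/2) = Gamma (1+a)"
    unfolding e4 using Dd_nz[of "(1+a)/2"] by simp
  finally show ?thesis .
qed

lemma DS_zero: "DS 0 b c = 1"
proof -
  have "dt 0 b c n = (if n = 0 then 1 else 0)" for n
    by (cases n) (simp_all add: dt_def gt_def pochhammer_rec)
  hence "dt 0 b c = (\<lambda>n. if n = 0 then 1 else 0)" by auto
  moreover have "(\<lambda>n. if n = 0 then (1::complex) else 0) sums 1"
    using sums_single[of 0 "\<lambda>_. (1::complex)"] by simp
  ultimately show ?thesis unfolding DS_def by (simp add: sums_iff)
qed

lemma dixon_std:
  assumes h1: "1 + a/2 \<notin> \<int>\<^sub>\<le>\<^sub>0"
    and l: "1 + a - b \<notin> \<int>\<^sub>\<le>\<^sub>0" "1 + a - c \<notin> \<int>\<^sub>\<le>\<^sub>0"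
    and conv: "Re (a + 2 - 2*b - 2*c) > 0"
  shows "DS a b c = Gamma (1+a/2) * Gamma (1+a-b) * Gamma (1+a-c) * Gamma (1+a/2-b-c) /
      (Gamma (1+a) * Gamma (1+a/2-b) * Gamma (1+a/2-c) * Gamma (1+a-b-c))"
proof (cases "a = 0")
  case False thus ?thesis by (rule dixon_std_nz[OF _ h1 l conv])
next
  case True
  have "Gamma (1-b) \<noteq> 0" "Gamma (1-c) \<noteq> 0" using l True by (auto simp: Gamma_eq_zero_iff)
  moreover have "Gamma (1-b-c) \<noteq> 0"
    using conv True Re_pos_npi[of "1-b-c"] by (auto simp: Gamma_eq_zero_iff)
  ultimately show ?thesis using True by (simp add: DS_zero)
qed

lemma poch_shift1: "z * pochhammer (z + 1) n = pochhammer z n * (z + of_nat n)"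
  for z :: complex
  using pochhammer_rec[of z n] pochhammer_Suc[of z n] by simp

lemma series_split:
  fixes f a1 p d1 :: complex
  defines "A \<equiv> f - 1" and "q \<equiv> f - p - 1"
  assumes p0: "p \<notin> \<int>\<^sub>\<le>\<^sub>0" and q0: "q \<notin> \<int>\<^sub>\<le>\<^sub>0"
  shows "pochhammer (f - 1) n * pochhammer a1 n * pochhammer (f - p) n * pochhammer (p + 1) n * pochhammer d1 n /
      (pochhammer (f - a1) n * pochhammer p n * pochhammer (f - p - 1) n * pochhammer (f - d1) n * fact n)
    = dt A a1 d1 n + of_nat n * (of_nat n + A) * dt A a1 d1 n / (p * q)"
proof -
  have pz: "p \<noteq> 0" "q \<noteq> 0" using p0 q0 by (auto intro: ccontr)
  have Pz: "pochhammer p n \<noteq> 0" "pochhammer q n \<noteq> 0" using poch_nz[OF p0] poch_nz[OF q0] by auto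
  have e1: "pochhammer (p + 1) n = pochhammer p n * (p + of_nat n) / p"
    using poch_shift1[of p n] pz by (simp add: field_simps)
  have fq: "f - p = q + 1" unfolding q_def by simp
  have e2: "pochhammer (f - p) n = pochhammer q n * (q + of_nat n) / q"
    unfolding fq using poch_shift1[of q n] pz by (simp add: field_simps)
  have lA: "1 + A - a1 = f - a1" "1 + A - d1 = f - d1" unfolding A_def by simp_all
  have Apq: "A = p + q" unfolding A_def q_def by simp
  define X where "X = pochhammer A n * pochhammer a1 n * pochhammer d1 n"
  define Y where "Y = pochhammer (f - a1) n * pochhammer (f - d1) n * fact n"
  define P where "P = pochhammer p n"
  define Q where "Q = pochhammer q n"
  define x where "x = (of_nat n :: complex)"
  have dtX: "dt A a1 d1 n = X / Y" unfolding dt_def gt_def lA X_def Y_def by simp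
  have "pochhammer (f - 1) n * pochhammer a1 n * pochhammer (f - p) n * pochhammer (p + 1) n * pochhammer d1 n /
      (pochhammer (f - a1) n * pochhammer p n * pochhammer (f - p - 1) n * pochhammer (f - d1) n * fact n)
      = X * ((q + x) * (p + x)) / (Y * (p * q))"
  proof -
    have "pochhammer (f - 1) n * pochhammer a1 n * pochhammer (f - p) n * pochhammer (p + 1) n * pochhammer d1 n /
      (pochhammer (f - a1) n * pochhammer p n * pochhammer (f - p - 1) n * pochhammer (f - d1) n * fact n)
      = pochhammer A n * pochhammer a1 n * (Q * (q + x) / q) * (P * (p + x) / p) * pochhammer d1 n /
        (pochhammer (f - a1) n * P * Q * pochhammer (f - d1) n * fact n)"
      unfolding e1 e2 A_def[symmetric] q_def[symmetric] P_def Q_def x_def ..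
    also have "\<dots> = X * ((q + x) * (p + x)) / (Y * (p * q))"
    proof -
      have gen: "a * b * (Q * u / q) * (P * v / p) * c / (d * P * Q * e * g) = (a * b * c) * (u * v) / ((d * e * g) * (p * q))"
        if "P \<noteq> 0" "Q \<noteq> 0" "p \<noteq> 0" "q \<noteq> 0" for a b c d e g u v P Q p q :: complex
        using that by (cases "d * e * g = 0") (auto simp: field_simps)
      show ?thesis unfolding X_def Y_def
        by (rule gen) (use Pz pz in \<open>auto simp: P_def Q_def\<close>)
    qed
    finally show ?thesis .
  qed
  also have "\<dots> = X / Y + x * (x + A) * (X / Y) / (p * q)"
  proof (cases "Y = 0")
    case True thus ?thesis by simp
  next
    case False
    thus ?thesis using pz unfolding Apq by (simp add: field_simps)
  qed
  finally show ?thesis unfolding dtX x_def .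
qed

lemma w_shift:
  fixes A B C p q :: complex
  assumes l: "1 + A - B \<notin> \<int>\<^sub>\<le>\<^sub>0" "1 + A - C \<notin> \<int>\<^sub>\<le>\<^sub>0"
  shows "of_nat (Suc m) * (of_nat (Suc m) + A) * dt A B C (Suc m) / (p * q) =
     A * (A + 1) * B * C / ((1 + A - B) * (1 + A - C) * p * q) * dt (A + 2) (B + 1) (C + 1) m"
proof -
  have lb: "1 + A - B \<noteq> 0" "1 + A - C \<noteq> 0" using npi_nz[OF l(1), of 0] npi_nz[OF l(2), of 0] by simp_all
  have pA: "pochhammer A (Suc m) * (A + of_nat (Suc m)) = A * (A + 1) * pochhammer (A + 2) m"
    using poch2[of A m] pochhammer_Suc[of A "Suc m"] by simp
  have pB: "pochhammer B (Suc m) = B * pochhammer (B + 1) m" "pochhammer C (Suc m) = C * pochhammer (C + 1) m"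
    by (simp_all add: pochhammer_rec)
  have pL: "pochhammer (1 + A - B) (Suc m) = (1 + A - B) * pochhammer (1 + (A + 2) - (B + 1)) m"
    "pochhammer (1 + A - C) (Suc m) = (1 + A - C) * pochhammer (1 + (A + 2) - (C + 1)) m"
    by (simp_all add: pochhammer_rec algebra_simps)
  define x where "x = (of_nat (Suc m) :: complex)"
  have x0: "x \<noteq> 0" unfolding x_def by (simp only: of_nat_eq_0_iff)
  have fS: "fact (Suc m) = x * fact m" unfolding x_def by simp
  have "of_nat (Suc m) * (of_nat (Suc m) + A) * dt A B C (Suc m) / (p * q) =
     x * (pochhammer A (Suc m) * (A + x)) * pochhammer B (Suc m) * pochhammer C (Suc m) /
     (pochhammer (1 + A - B) (Suc m) * pochhammer (1 + A - C) (Suc m) * fact (Suc m) * (p * q))"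
    unfolding dt_def gt_def x_def[symmetric] by (simp add: ac_simps)
  also have "\<dots> = x * (A * (A + 1) * pochhammer (A + 2) m) * (B * pochhammer (B + 1) m) * (C * pochhammer (C + 1) m) /
     (((1 + A - B) * pochhammer (1 + (A + 2) - (B + 1)) m) * ((1 + A - C) * pochhammer (1 + (A + 2) - (C + 1)) m) * (x * fact m) * (p * q))"
    unfolding pB pL fS pA[unfolded x_def[symmetric]] ..
  also have "\<dots> = A * (A + 1) * B * C / ((1 + A - B) * (1 + A - C) * p * q) * dt (A + 2) (B + 1) (C + 1) m"
  proof -
    have gen: "x * (a1 * pa) * (b1 * pb) * (c1 * pc) / ((l1 * ql) * (l2 * qm) * (x * F) * (p * q)) =
       a1 * b1 * c1 / (l1 * l2 * p * q) * (pa * pb * pc / (ql * qm * F))"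
      if "x \<noteq> 0" for x a1 pa b1 pb c1 pc l1 ql l2 qm F p q :: complex
      using that by (simp add: field_simps)
    show ?thesis unfolding dt_def gt_def by (rule gen[OF x0])
  qed
  finally show ?thesis .
qed

lemma Gamma_down: "Gamma z = Gamma (z + 1) / z" for z :: complex
proof (cases "z \<in> \<int>\<^sub>\<le>\<^sub>0")
  case True
  show ?thesis
  proof (cases "z = 0")
    case True thus ?thesis by (simp add: Gamma_eq_zero_iff)
  next
    case False
    from \<open>z \<in> \<int>\<^sub>\<le>\<^sub>0\<close> obtain m where m: "z = - of_nat m" by (elim nonpos_Ints_cases')
    with False have "m \<ge> 1" by (cases m) auto
    hence "z + 1 = - of_nat (m - 1)" using m by (simp add: of_nat_diff)
    hence "z + 1 \<in> \<int>\<^sub>\<le>\<^sub>0" by (simp only: minus_of_nat_in_nonpos_Ints)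
    moreover have "Gamma z = 0" using \<open>z \<in> \<int>\<^sub>\<le>\<^sub>0\<close> by (simp only: Gamma_eq_zero_iff)
    ultimately show ?thesis by (simp only: Gamma_eq_zero_iff[symmetric]) simp
  qed
next
  case False
  hence "z \<noteq> 0" by auto
  thus ?thesis using Gamma_plus1[OF False] by (simp add: field_simps)
qed

lemma rat_final:
  fixes f a1 p d1 h k :: complex
  assumes nz: "f - a1 \<noteq> 0" "f - d1 \<noteq> 0" "p \<noteq> 0" "f - p - 1 \<noteq> 0" "a1 \<noteq> 0"
    "f/2 - a1 - d1 - 1/2 \<noteq> 0"
    and h_def: "h = p * (f - p - 1) / a1"
    and den: "d1 * (f / 2 - 1 / 2) - h * (1 / 2 + d1 + a1 - f / 2) \<noteq> 0"
    and k_def: "k = h * (1 + d1 + a1 - f) * (1 / 2 + a1 - f / 2)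
                   / (d1 * (f / 2 - 1 / 2) - h * (1 / 2 + d1 + a1 - f / 2))"
    and k0: "k \<noteq> 0"
  shows "(f+1)*f + (f - 1) * (f - 1 + 1) * a1 * d1 / ((f - a1) * (f - d1) * p * (f - p - 1)) *
      ((f/2 + 1/2) * (f - a1) * (f - d1) / (f/2 - a1 - d1 - 1/2))
    = (f+1)*f*(f - a1 - d1 - 1)*(f/2 - a1 - 1/2) / ((f/2 - a1 - d1 - 1/2) * k)"
proof -
  have h0: "h \<noteq> 0" and u0: "1 + d1 + a1 - f \<noteq> 0" and v0: "1 / 2 + a1 - f / 2 \<noteq> 0"
    using k0 unfolding k_def by auto
  have pq: "p * (f - p - 1) = a1 * h" unfolding h_def using nz by (simp add: field_simps)
  have k': "1 / k = (d1 * (f / 2 - 1 / 2) - h * (1 / 2 + d1 + a1 - f / 2)) / (h * (1 + d1 + a1 - f) * (1 / 2 + a1 - f / 2))"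
    unfolding k_def by simp
  have e1: "(f - 1) * (f - 1 + 1) * a1 * d1 / ((f - a1) * (f - d1) * p * (f - p - 1)) *
      ((f/2 + 1/2) * (f - a1) * (f - d1) / (f/2 - a1 - d1 - 1/2)) =
      (f - 1) * f * d1 * (f/2 + 1/2) / (h * (f/2 - a1 - d1 - 1/2))"
  proof -
    have pq': "(f - a1) * (f - d1) * p * (f - p - 1) = (f - a1) * (f - d1) * (a1 * h)"
      using pq by (simp only: mult.assoc)
    have gen: "B * a * dd / (u * v * (a * hh)) * (M * u * v / ss) = B * dd * M / (hh * ss)"
      if "u \<noteq> 0" "v \<noteq> 0" "a \<noteq> 0" "hh \<noteq> 0" "ss \<noteq> 0" for B a dd u v hh M ss :: complex
      using that by (simp add: field_simps)
    have "(f - 1) * (f - 1 + 1) * a1 * d1 / ((f - a1) * (f - d1) * (a1 * h)) *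
      ((f/2 + 1/2) * (f - a1) * (f - d1) / (f/2 - a1 - d1 - 1/2)) =
      (f - 1) * (f - 1 + 1) * d1 * (f/2 + 1/2) / (h * (f/2 - a1 - d1 - 1/2))"
      by (rule gen) (use nz h0 in auto)
    thus ?thesis unfolding pq' by simp
  qed
  have e2: "(f+1)*f*(f - a1 - d1 - 1)*(f/2 - a1 - 1/2) / ((f/2 - a1 - d1 - 1/2) * k) =
      (f+1)*f*(f - a1 - d1 - 1)*(f/2 - a1 - 1/2) * (1/k) / (f/2 - a1 - d1 - 1/2)"
    by (simp add: field_simps)
  define w4 where "w4 = f/2 - a1 - d1 - 1/2"
  define U where "U = 1 + d1 + a1 - f"
  define V where "V = 1 / 2 + a1 - f / 2"
  have w40: "w4 \<noteq> 0" using nz unfolding w4_def by simp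
  have U0: "U \<noteq> 0" and V0: "V \<noteq> 0" using u0 v0 unfolding U_def V_def by simp_all
  have r1: "f - a1 - d1 - 1 = -U" unfolding U_def by simp
  have r2: "f/2 - a1 - 1/2 = -V" unfolding V_def by simp
  have r3: "d1 * (f / 2 - 1 / 2) - h * (1 / 2 + d1 + a1 - f / 2) = d1*(f-1)/2 + h*w4"
    unfolding w4_def by (simp add: field_simps)
  have r4: "f - 1 + 1 = f" by simp
  have r5: "f/2 + 1/2 = (f+1)/2" by simp
  have G: "(f+1)*f + (f - 1) * f * d1 * ((f+1)/2) / (h * w4) =
     (f+1)*f*(-U)*(-V) * ((d1*(f-1)/2 + h*w4) / (h * U * V)) / w4"
    using h0 w40 U0 V0 by (simp add: field_simps)
  show ?thesis unfolding e1 unfolding e2 unfolding k' unfolding r3 r4 r5 w4_def[symmetric] U_def[symmetric] V_def[symmetric] r1 r2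
    by (rule G)
qed

theorem mainTheorem8:
  fixes f a\<^sub>1 p d\<^sub>1 h k :: complex
  assumes conv: "Re (f - 2 * a\<^sub>1 - 2 * d\<^sub>1 - 1) > 0"
    and lower: "f - a\<^sub>1 \<notin> \<int>\<^sub>\<le>\<^sub>0" "p \<notin> \<int>\<^sub>\<le>\<^sub>0" "f - p - 1 \<notin> \<int>\<^sub>\<le>\<^sub>0" "f - d\<^sub>1 \<notin> \<int>\<^sub>\<le>\<^sub>0"
    and a1: "a\<^sub>1 \<noteq> 0"
    and h_def: "h = p * (f - p - 1) / a\<^sub>1"
    and den: "d\<^sub>1 * (f / 2 - 1 / 2) - h * (1 / 2 + d\<^sub>1 + a\<^sub>1 - f / 2) \<noteq> 0"
    and k_def: "k = h * (1 + d\<^sub>1 + a\<^sub>1 - f) * (1 / 2 + a\<^sub>1 - f / 2)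
                   / (d\<^sub>1 * (f / 2 - 1 / 2) - h * (1 / 2 + d\<^sub>1 + a\<^sub>1 - f / 2))"
    and k: "k \<notin> \<int>\<^sub>\<le>\<^sub>0"
    and gam: "f / 2 + 1 / 2 \<notin> \<int>\<^sub>\<le>\<^sub>0"
  shows "hypergeom [f - 1, a\<^sub>1, f - p, p + 1, d\<^sub>1] [f - a\<^sub>1, p, f - p - 1, f - d\<^sub>1] 1 =
    Gamma (f - d\<^sub>1) * Gamma (f / 2 + 1 / 2) * Gamma (f - a\<^sub>1) * Gamma (f / 2 - a\<^sub>1 - d\<^sub>1 - 1 / 2)
    / (Gamma f * Gamma (f / 2 - d\<^sub>1 + 1 / 2) * Gamma (f - a\<^sub>1 - d\<^sub>1 - 1) * Gamma (f / 2 - a\<^sub>1 - 1 / 2))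
    * (Gamma k / Gamma (k + 1))"
proof -
  define A where "A = f - 1"
  define q where "q = f - p - 1"
  have q0: "q \<notin> \<int>\<^sub>\<le>\<^sub>0" using lower(3) unfolding q_def .
  have eA: "1 + A - a\<^sub>1 = f - a\<^sub>1" "1 + A - d\<^sub>1 = f - d\<^sub>1" unfolding A_def by simp_all
  have la: "1 + A - a\<^sub>1 \<notin> \<int>\<^sub>\<le>\<^sub>0" "1 + A - d\<^sub>1 \<notin> \<int>\<^sub>\<le>\<^sub>0" unfolding eA using lower(1,4) by simp_all
  have eA2: "1 + (A + 2) - (a\<^sub>1 + 1) = (f - a\<^sub>1) + of_nat 1" "1 + (A + 2) - (d\<^sub>1 + 1) = (f - d\<^sub>1) + of_nat 1"
    unfolding A_def by simp_all
  have la2: "1 + (A + 2) - (a\<^sub>1 + 1) \<notin> \<int>\<^sub>\<le>\<^sub>0" "1 + (A + 2) - (d\<^sub>1 + 1) \<notin> \<int>\<^sub>\<le>\<^sub>0"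
    unfolding eA2 using npi_add_nat[OF lower(1)] npi_add_nat[OF lower(4)] by blast+
  have ehA: "1 + A / 2 = f / 2 + 1 / 2" unfolding A_def by (simp add: field_simps)
  have hA: "1 + A / 2 \<notin> \<int>\<^sub>\<le>\<^sub>0" unfolding ehA by (rule gam)
  have ehA2: "1 + (A + 2) / 2 = (f / 2 + 1 / 2) + of_nat 1" unfolding A_def by (simp add: field_simps)
  have hA2: "1 + (A + 2) / 2 \<notin> \<int>\<^sub>\<le>\<^sub>0" unfolding ehA2 by (rule npi_add_nat[OF gam])
  have cv1: "Re (A + 2 - 2 * a\<^sub>1 - 2 * d\<^sub>1) > 0" using conv unfolding A_def by simp
  have cv2: "Re ((A + 2) + 2 - 2 * (a\<^sub>1 + 1) - 2 * (d\<^sub>1 + 1)) > 0" using conv unfolding A_def by simp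
  define \<kappa> where "\<kappa> = A * (A + 1) * a\<^sub>1 * d\<^sub>1 / ((1 + A - a\<^sub>1) * (1 + A - d\<^sub>1) * p * q)"
  define D1 where "D1 = DS A a\<^sub>1 d\<^sub>1"
  define D2 where "D2 = DS (A + 2) (a\<^sub>1 + 1) (d\<^sub>1 + 1)"
  have S1: "dt A a\<^sub>1 d\<^sub>1 sums D1"
    unfolding D1_def DS_def by (rule summable_sums[OF dt_summable[OF la cv1]])
  have S2: "dt (A + 2) (a\<^sub>1 + 1) (d\<^sub>1 + 1) sums D2"
    unfolding D2_def DS_def by (rule summable_sums[OF dt_summable[OF la2 cv2]])
  define w where "w n = of_nat n * (of_nat n + A) * dt A a\<^sub>1 d\<^sub>1 n / (p * q)" for n
  have "(\<lambda>m. w (Suc m)) = (\<lambda>m. \<kappa> * dt (A + 2) (a\<^sub>1 + 1) (d\<^sub>1 + 1) m)"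
    unfolding w_def \<kappa>_def by (rule ext, rule w_shift[OF la])
  with sums_mult[OF S2, of \<kappa>] have "(\<lambda>m. w (Suc m)) sums (\<kappa> * D2)" by simp
  hence "w sums (\<kappa> * D2 + w 0)" by (simp only: sums_Suc_iff)
  moreover have "w 0 = 0" by (simp add: w_def)
  ultimately have Sw: "w sums (\<kappa> * D2)" by simp
  have T: "(\<lambda>n. pochhammer (f - 1) n * pochhammer a\<^sub>1 n * pochhammer (f - p) n * pochhammer (p + 1) n * pochhammer d\<^sub>1 n /
      (pochhammer (f - a\<^sub>1) n * pochhammer p n * pochhammer (f - p - 1) n * pochhammer (f - d\<^sub>1) n * fact n))
      = (\<lambda>n. dt A a\<^sub>1 d\<^sub>1 n + w n)"
    unfolding w_def A_def q_def by (rule ext, rule series_split[OF lower(2) q0[unfolded q_def]])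
  have "(\<lambda>n. dt A a\<^sub>1 d\<^sub>1 n + w n) sums (D1 + \<kappa> * D2)" by (rule sums_add[OF S1 Sw])
  hence ST: "(\<lambda>n. pochhammer (f - 1) n * pochhammer a\<^sub>1 n * pochhammer (f - p) n * pochhammer (p + 1) n * pochhammer d\<^sub>1 n /
      (pochhammer (f - a\<^sub>1) n * pochhammer p n * pochhammer (f - p - 1) n * pochhammer (f - d\<^sub>1) n * fact n))
      sums (D1 + \<kappa> * D2)" unfolding T .
  have HG: "hypergeom [f - 1, a\<^sub>1, f - p, p + 1, d\<^sub>1] [f - a\<^sub>1, p, f - p - 1, f - d\<^sub>1] 1 = D1 + \<kappa> * D2"
    using ST unfolding hypergeom_def by (simp add: sums_iff ac_simps)
  define G1 where "G1 = Gamma (f / 2 + 1 / 2)"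
  define G2 where "G2 = Gamma (f - a\<^sub>1)"
  define G3 where "G3 = Gamma (f - d\<^sub>1)"
  define X4 where "X4 = Gamma (f / 2 + 1 / 2 - a\<^sub>1 - d\<^sub>1)"
  define X5 where "X5 = Gamma (f + 1 + 1)"
  define G6 where "G6 = Gamma (f / 2 - d\<^sub>1 + 1 / 2)"
  define X7 where "X7 = Gamma (f - a\<^sub>1 - d\<^sub>1)"
  define X8 where "X8 = Gamma (f / 2 + 1 / 2 - a\<^sub>1)"
  have GF: "Gamma f = X5 / ((f + 1) * f)"
    using Gamma_down[of f] Gamma_down[of "f + 1"] unfolding X5_def by simp
  have G4': "Gamma (f / 2 - a\<^sub>1 - d\<^sub>1 - 1 / 2) = X4 / (f / 2 - a\<^sub>1 - d\<^sub>1 - 1 / 2)"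
  proof -
    have e: "f / 2 - a\<^sub>1 - d\<^sub>1 - 1 / 2 + 1 = f / 2 + 1 / 2 - a\<^sub>1 - d\<^sub>1" by simp
    show ?thesis using Gamma_down[of "f / 2 - a\<^sub>1 - d\<^sub>1 - 1 / 2"] unfolding e X4_def .
  qed
  have G7': "Gamma (f - a\<^sub>1 - d\<^sub>1 - 1) = X7 / (f - a\<^sub>1 - d\<^sub>1 - 1)"
  proof -
    have e: "f - a\<^sub>1 - d\<^sub>1 - 1 + 1 = f - a\<^sub>1 - d\<^sub>1" by simp
    show ?thesis using Gamma_down[of "f - a\<^sub>1 - d\<^sub>1 - 1"] unfolding e X7_def .
  qed
  have G8': "Gamma (f / 2 - a\<^sub>1 - 1 / 2) = X8 / (f / 2 - a\<^sub>1 - 1 / 2)"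
  proof -
    have e: "f / 2 - a\<^sub>1 - 1 / 2 + 1 = f / 2 + 1 / 2 - a\<^sub>1" by simp
    show ?thesis using Gamma_down[of "f / 2 - a\<^sub>1 - 1 / 2"] unfolding e X8_def .
  qed
  have Gk: "Gamma k / Gamma (k + 1) = 1 / k"
  proof -
    have "Gamma k \<noteq> 0" using k by (simp add: Gamma_eq_zero_iff)
    moreover have "k \<noteq> 0" using k by auto
    ultimately show ?thesis using Gamma_plus1[OF k] by (simp add: field_simps)
  qed
  have D1v: "D1 = G1 * G2 * G3 * X4 / (Gamma f * X8 * G6 * X7)"
  proof -
    have g1: "Gamma (1 + A / 2) = G1" unfolding G1_def A_def by (simp add: field_simps)
    have g2: "Gamma (1 + A - a\<^sub>1) = G2" unfolding G2_def A_def by simp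
    have g3: "Gamma (1 + A - d\<^sub>1) = G3" unfolding G3_def A_def by simp
    have g4: "Gamma (1 + A / 2 - a\<^sub>1 - d\<^sub>1) = X4"
    proof -
      have e: "1 + A / 2 - a\<^sub>1 - d\<^sub>1 = f / 2 + 1 / 2 - a\<^sub>1 - d\<^sub>1" unfolding A_def by (simp add: field_simps)
      show ?thesis unfolding e X4_def ..
    qed
    have g5: "Gamma (1 + A) = Gamma f" unfolding A_def by simp
    have g6: "Gamma (1 + A / 2 - a\<^sub>1) = X8"
    proof -
      have e: "1 + A / 2 - a\<^sub>1 = f / 2 + 1 / 2 - a\<^sub>1" unfolding A_def by (simp add: field_simps)
      show ?thesis unfolding e X8_def ..
    qed
    have g7: "Gamma (1 + A / 2 - d\<^sub>1) = G6"
    proof -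
      have e: "1 + A / 2 - d\<^sub>1 = f / 2 - d\<^sub>1 + 1 / 2" unfolding A_def by (simp add: field_simps)
      show ?thesis unfolding e G6_def ..
    qed
    have g8: "Gamma (1 + A - a\<^sub>1 - d\<^sub>1) = X7" unfolding X7_def A_def by simp
    show ?thesis unfolding D1_def dixon_std[OF hA la cv1] g1 g2 g3 g4 g5 g6 g7 g8 ..
  qed
  have D2v: "D2 = ((f / 2 + 1 / 2) * G1) * ((f - a\<^sub>1) * G2) * ((f - d\<^sub>1) * G3) * (X4 / (f / 2 - a\<^sub>1 - d\<^sub>1 - 1 / 2)) / (X5 * X8 * G6 * X7)"
  proof -
    have g1: "Gamma (1 + (A + 2) / 2) = (f / 2 + 1 / 2) * G1"
    proof -
      have e: "1 + (A + 2) / 2 = (f / 2 + 1 / 2) + 1" unfolding A_def by (simp add: field_simps)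
      show ?thesis unfolding e G1_def by (rule Gamma_plus1[OF gam])
    qed
    have g2: "Gamma (1 + (A + 2) - (a\<^sub>1 + 1)) = (f - a\<^sub>1) * G2"
    proof -
      have e: "1 + (A + 2) - (a\<^sub>1 + 1) = (f - a\<^sub>1) + 1" unfolding A_def by simp
      show ?thesis unfolding e G2_def by (rule Gamma_plus1[OF lower(1)])
    qed
    have g3: "Gamma (1 + (A + 2) - (d\<^sub>1 + 1)) = (f - d\<^sub>1) * G3"
    proof -
      have e: "1 + (A + 2) - (d\<^sub>1 + 1) = (f - d\<^sub>1) + 1" unfolding A_def by simp
      show ?thesis unfolding e G3_def by (rule Gamma_plus1[OF lower(4)])
    qed
    have g4: "Gamma (1 + (A + 2) / 2 - (a\<^sub>1 + 1) - (d\<^sub>1 + 1)) = X4 / (f / 2 - a\<^sub>1 - d\<^sub>1 - 1 / 2)"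
    proof -
      have e: "1 + (A + 2) / 2 - (a\<^sub>1 + 1) - (d\<^sub>1 + 1) = f / 2 - a\<^sub>1 - d\<^sub>1 - 1 / 2" unfolding A_def by (simp add: field_simps)
      show ?thesis unfolding e by (rule G4')
    qed
    have g5: "Gamma (1 + (A + 2)) = X5"
    proof -
      have e: "1 + (A + 2) = f + 1 + 1" unfolding A_def by simp
      show ?thesis unfolding e X5_def ..
    qed
    have g6: "Gamma (1 + (A + 2) / 2 - (a\<^sub>1 + 1)) = X8"
    proof -
      have e: "1 + (A + 2) / 2 - (a\<^sub>1 + 1) = f / 2 + 1 / 2 - a\<^sub>1" unfolding A_def by (simp add: field_simps)
      show ?thesis unfolding e X8_def ..
    qed
    have g7: "Gamma (1 + (A + 2) / 2 - (d\<^sub>1 + 1)) = G6"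
    proof -
      have e: "1 + (A + 2) / 2 - (d\<^sub>1 + 1) = f / 2 - d\<^sub>1 + 1 / 2" unfolding A_def by (simp add: field_simps)
      show ?thesis unfolding e G6_def ..
    qed
    have g8: "Gamma (1 + (A + 2) - (a\<^sub>1 + 1) - (d\<^sub>1 + 1)) = X7"
    proof -
      have e: "1 + (A + 2) - (a\<^sub>1 + 1) - (d\<^sub>1 + 1) = f - a\<^sub>1 - d\<^sub>1" unfolding A_def by simp
      show ?thesis unfolding e X7_def ..
    qed
    show ?thesis unfolding D2_def dixon_std[OF hA2 la2 cv2] g1 g2 g3 g4 g5 g6 g7 g8 ..
  qed
  have kap: "\<kappa> = (f - 1) * (f - 1 + 1) * a\<^sub>1 * d\<^sub>1 / ((f - a\<^sub>1) * (f - d\<^sub>1) * p * (f - p - 1))"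
    unfolding \<kappa>_def eA unfolding A_def q_def ..
  have k0: "k \<noteq> 0" using k by auto
  have w40: "f / 2 - a\<^sub>1 - d\<^sub>1 - 1 / 2 \<noteq> 0"
  proof
    assume "f / 2 - a\<^sub>1 - d\<^sub>1 - 1 / 2 = 0"
    moreover have "f - 2 * a\<^sub>1 - 2 * d\<^sub>1 - 1 = 2 * (f / 2 - a\<^sub>1 - d\<^sub>1 - 1 / 2)" by (simp add: field_simps)
    ultimately have "f - 2 * a\<^sub>1 - 2 * d\<^sub>1 - 1 = 0" by (metis mult_zero_right)
    hence "Re (f - 2 * a\<^sub>1 - 2 * d\<^sub>1 - 1) = 0" by (simp only: zero_complex.sel)
    with conv show False by linarith
  qed
  have s70: "f - a\<^sub>1 - d\<^sub>1 - 1 \<noteq> 0" and s80: "f / 2 - a\<^sub>1 - 1 / 2 \<noteq> 0"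
  proof -
    have "1 + d\<^sub>1 + a\<^sub>1 - f \<noteq> 0" "1 / 2 + a\<^sub>1 - f / 2 \<noteq> 0" using k0 unfolding k_def by auto
    thus "f - a\<^sub>1 - d\<^sub>1 - 1 \<noteq> 0" "f / 2 - a\<^sub>1 - 1 / 2 \<noteq> 0" by (auto simp: algebra_simps)
  qed
  have nzl: "f - a\<^sub>1 \<noteq> 0" "f - d\<^sub>1 \<noteq> 0" "p \<noteq> 0" "f - p - 1 \<noteq> 0"
    using lower by (auto intro: ccontr)
  have RAT: "(f+1)*f + \<kappa> * ((f/2 + 1/2) * (f - a\<^sub>1) * (f - d\<^sub>1) / (f/2 - a\<^sub>1 - d\<^sub>1 - 1/2))
    = (f+1)*f*(f - a\<^sub>1 - d\<^sub>1 - 1)*(f/2 - a\<^sub>1 - 1/2) / ((f/2 - a\<^sub>1 - d\<^sub>1 - 1/2) * k)"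
    unfolding kap by (rule rat_final[OF nzl a1 w40 h_def den k_def k0])
  have goal: "D1 + \<kappa> * D2 = G3 * G1 * G2 * (X4 / (f / 2 - a\<^sub>1 - d\<^sub>1 - 1 / 2))
      / ((X5 / ((f + 1) * f)) * G6 * (X7 / (f - a\<^sub>1 - d\<^sub>1 - 1)) * (X8 / (f / 2 - a\<^sub>1 - 1 / 2))) * (1 / k)"
  proof (cases "f = 0")
    case True
    hence "\<kappa> = 0" unfolding kap by simp
    thus ?thesis unfolding D1v GF using True by simp
  next
    case f0: False
    show ?thesis
    proof (cases "X5 = 0 \<or> X8 = 0 \<or> G6 = 0 \<or> X7 = 0")
      case True
      thus ?thesis unfolding D1v D2v GF by auto
    next
      case False
      have f1: "f + 1 \<noteq> 0"
      proof
        assume "f + 1 = 0"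
        hence "f / 2 + 1 / 2 = 0" by (simp add: field_simps)
        with gam show False by simp
      qed
      define ww where "ww = f / 2 - a\<^sub>1 - d\<^sub>1 - 1 / 2"
      define t7 where "t7 = f - a\<^sub>1 - d\<^sub>1 - 1"
      define t8 where "t8 = f / 2 - a\<^sub>1 - 1 / 2"
      have ww0: "ww \<noteq> 0" "t7 \<noteq> 0" "t8 \<noteq> 0" unfolding ww_def t7_def t8_def using w40 s70 s80 by auto
      define R where "R = (f+1)*f + \<kappa> * ((f/2 + 1/2) * (f - a\<^sub>1) * (f - d\<^sub>1) / ww)"
      have L: "D1 + \<kappa> * D2 = G1 * G2 * G3 * X4 / (X5 * X8 * G6 * X7) * R"
        unfolding D1v D2v GF R_def ww_def[symmetric] using False f0 f1 ww0 by (simp add: field_simps)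
      have Rr: "G3 * G1 * G2 * (X4 / ww)
      / ((X5 / ((f + 1) * f)) * G6 * (X7 / t7) * (X8 / t8)) * (1 / k)
        = G1 * G2 * G3 * X4 / (X5 * X8 * G6 * X7) *
          ((f+1)*f*t7*t8 / (ww * k))"
        using False f0 f1 ww0 k0 by (simp add: field_simps)
      have RAT': "R = (f+1)*f*t7*t8 / (ww * k)" unfolding R_def ww_def t7_def t8_def by (rule RAT)
      show ?thesis unfolding ww_def[symmetric] t7_def[symmetric] t8_def[symmetric] L Rr RAT' ..
    qed
  qed
  show ?thesis unfolding HG goal G4' G7' G8' Gk GF G1_def[symmetric] G2_def[symmetric] G3_def[symmetric] G6_def[symmetric] ..


qed

end
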